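(* Let $\mu\in\mathcal P_2(\mathbb R^d)$ and $N\ge1$. A subset $\Gamma\subset\mathbb R^d$ with cardinality at most $N$ is a quadratic optimal $N$-quantizer of $\mu$ if and only if there exists $\nu\in\mathcal P_{\le\mu}(\mathbb R^d,N)$ with $\nu(\Gamma)=1$ satisfying one of the following two equivalent conditions: (i) $W_2(\mu,\nu)=\inf_{\eta\in\mathcal P_{\le\mu}(\mathbb R^d,N)}W_2(\mu,\eta)$; (ii) $\int|x|^2\nu(dx)=\sup_{\eta\in\mathcal P_{\le\mu}(\mathbb R^d,N)}\int|x|^2\eta(dx)$. Moreover, in that case $W_2(\nu,\mu)=M_2(\nu,\mu)$ and $\nu=\hat\mu^\Gamma$.
   Context: $\mu\le_{cvx}\nu$ (convex order) means $\int\varphi\,d\mu\le\int\varphi\,d\nu$ for all convex $\varphi:\mathbb R^d\to\mathbb R$. $\mathcal P(\mathbb R^d,N)$ is the set of probability measures whose support has at most $N$ points and $\mathcal P_{\le\mu}(\mathbb R^d,N)=\{\eta\in\mathcal P(\mathbb R^d,N):\eta\le_{cvx}\mu\}$. $W_2$ is the quadratic Wasserstein distance. For $\eta\le_{cvx}\nu$ with finite first moments, a martingale coupling is a coupling $\pi(dx,dy)=\eta(dx)\pi_x(dy)$ with $\int y\,\pi_x(dy)=x$ for $\eta$-a.e. $x$, and $M_p(\eta,\nu)=\inf\left(\int|x-y|^p\pi(dx,dy)\right)^{1/p}$ over martingale couplings $\pi$ of $\eta,\nu$. A quadratic optimal $N$-quantizer of $\mu$ is a set $\Gamma$ with $|\Gamma|\le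 N$ minimizing $\int\mathrm{dist}(x,\Gamma)^2\mu(dx)$; $\hat\mu^\Gamma=\mu\circ\mathrm{Proj}_\Gamma^{-1}$ for a Borel nearest neighbour projection $\mathrm{Proj}_\Gamma$ (well defined independently of the choice for optimal $\Gamma$). *)

theory Defs
  imports "HOL-Probability.Probability"
begin

definition P2 :: "'a::euclidean_space measure \<Rightarrow> bool" where
  "P2 \<mu> \<longleftrightarrow> prob_space \<mu> \<and> sets \<mu> = sets borel \<and> integrable \<mu> (\<lambda>x. norm x ^ 2)"

definition P1 :: "'a::euclidean_space measure \<Rightarrow> bool" where
  "P1 \<mu> \<longleftrightarrow> prob_space \<mu> \<and> sets \<mu> = sets borel \<and> integrable \<mu> norm"

text \<open>Integrals of convex functions are taken in (-inf, +inf]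
  (convex functions are bounded below by affine ones, which are integrable under
  finite first moments); hence the inequality is trivial if the right-hand integral
  is +inf, and otherwise both sides are finite.\<close>
definition cvx_le :: "'a::euclidean_space measure \<Rightarrow> 'a measure \<Rightarrow> bool" where
  "cvx_le \<mu> \<nu> \<longleftrightarrow> P1 \<mu> \<and> P1 \<nu> \<and>
     (\<forall>\<phi>::'a \<Rightarrow> real. convex_on UNIV \<phi> \<longrightarrow> integrable \<nu> \<phi> \<longrightarrow>
        integrable \<mu> \<phi> \<and> (\<integral>x. \<phi> x \<partial>\<mu>) \<le> (\<integral>x. \<phi> x \<partial>\<nu>))"

definition PN :: "nat \<Rightarrow> 'a::euclidean_space measure set" where
  "PN N = {\<eta>. prob_space \<eta> \<and> sets \<eta> = sets borel \<and>
              (\<exists>S. finite S \<and> card S \<le> N \<and> emeasure \<eta> S = 1)}"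

definition Pcvx :: "'a::euclidean_space measure \<Rightarrow> nat \<Rightarrow> 'a measure set" where
  "Pcvx \<mu> N = {\<eta>. \<eta> \<in> PN N \<and> cvx_le \<eta> \<mu>}"

definition couplings :: "'a::euclidean_space measure \<Rightarrow> 'a measure \<Rightarrow> ('a \<times> 'a) measure set" where
  "couplings \<mu> \<nu> = {\<pi>. sets \<pi> = sets borel \<and> distr \<pi> borel fst = \<mu> \<and> distr \<pi> borel snd = \<nu>}"

definition W2 :: "'a::euclidean_space measure \<Rightarrow> 'a measure \<Rightarrow> real" where
  "W2 \<mu> \<nu> = sqrt (enn2real (INF \<pi>\<in>couplings \<mu> \<nu>.
       \<integral>\<^sup>+ z. ennreal ((dist (fst z) (snd z))^2) \<partial>\<pi>))"

definition mart_couplings :: "'a::euclidean_space measure \<Rightarrow> 'a measure \<Rightarrow> ('a \<times> 'a) measure set" where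
  "mart_couplings \<eta> \<nu> = {\<pi>. \<pi> \<in> couplings \<eta> \<nu> \<and>
     (\<exists>K. K \<in> measurable \<eta> (prob_algebra borel) \<and>
          \<pi> = \<eta> \<bind> (\<lambda>x. distr (K x) borel (\<lambda>y. (x, y))) \<and>
          (AE x in \<eta>. integrable (K x) (\<lambda>y. y) \<and> (\<integral>y. y \<partial>(K x)) = x))}"

definition M2 :: "'a::euclidean_space measure \<Rightarrow> 'a measure \<Rightarrow> real" where
  "M2 \<eta> \<nu> = sqrt (enn2real (INF \<pi>\<in>mart_couplings \<eta> \<nu>.
       \<integral>\<^sup>+ z. ennreal ((dist (fst z) (snd z))^2) \<partial>\<pi>))"

definition distortion :: "'a::euclidean_space measure \<Rightarrow> 'a set \<Rightarrow> ennreal" where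
  "distortion \<mu> \<Gamma> = (\<integral>\<^sup>+ x. ennreal ((infdist x \<Gamma>)^2) \<partial>\<mu>)"

text \<open>Quadratic optimal N-quantizer (grids are nonempty: dist(x, {}) = +inf).\<close>
definition opt_quantizer :: "'a::euclidean_space measure \<Rightarrow> nat \<Rightarrow> 'a set \<Rightarrow> bool" where
  "opt_quantizer \<mu> N \<Gamma> \<longleftrightarrow> finite \<Gamma> \<and> \<Gamma> \<noteq> {} \<and> card \<Gamma> \<le> N \<and>
     (\<forall>\<Gamma>'. finite \<Gamma>' \<and> \<Gamma>' \<noteq> {} \<and> card \<Gamma>' \<le> N \<longrightarrow> distortion \<mu> \<Gamma> \<le> distortion \<mu> \<Gamma>')"

definition nn_proj :: "'a::euclidean_space set \<Rightarrow> ('a \<Rightarrow> 'a) \<Rightarrow> bool" where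
  "nn_proj \<Gamma> p \<longleftrightarrow> p \<in> borel_measurable borel \<and> (\<forall>x. p x \<in> \<Gamma> \<and> dist x (p x) = infdist x \<Gamma>)"

end

theory Submission
  imports Defs
begin


lemma sum_ind_single:
  assumes "finite S" "x \<in> S"
  shows "(\<Sum>s\<in>S. indicator {s} x * g s) = (g x :: 'b::semiring_1)"
proof -
  have "(\<Sum>s\<in>S. indicator {s} x * g s) = (\<Sum>s\<in>S. if x = s then g x else 0)"
    by (intro sum.cong) (auto simp: indicator_def)
  also have "\<dots> = g x" using assms by simp
  finally show ?thesis .
qed

lemma int_ind_const:
  assumes "finite_measure M" "A \<in> sets M"
  shows "integrable M (\<lambda>x. indicator A x * (c::real))"
proof -
  have "emeasure M A < \<infinity>" using finite_measure.emeasure_finite[OF assms(1)] by (simp add: less_top)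
  from integrable_indicator[OF assms(2) this, of c] show ?thesis by simp
qed

lemma fin_borel: "finite (S::'a::t1_space set) \<Longrightarrow> S \<in> sets borel"
  by (intro borel_closed finite_imp_closed)

lemma fin_supp_AE:
  fixes \<eta> :: "'a::euclidean_space measure"
  assumes "prob_space \<eta>" "sets \<eta> = sets borel" "finite S" "emeasure \<eta> S = 1"
  shows "AE x in \<eta>. x \<in> S"
proof -
  interpret prob_space \<eta> by fact
  have S: "S \<in> sets \<eta>" using assms(2,3) fin_borel by auto
  show ?thesis using AE_in_set_eq_1[OF S] assms(4) by (simp add: emeasure_eq_measure)
qed

lemma fin_supp_nn:
  fixes \<eta> :: "'a::euclidean_space measure"
  assumes "prob_space \<eta>" "sets \<eta> = sets borel" "finite S" "emeasure \<eta> S = 1"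
  shows "(\<integral>\<^sup>+x. f x \<partial>\<eta>) = (\<Sum>s\<in>S. f s * emeasure \<eta> {s})"
proof -
  have sing: "\<And>s. {s} \<in> sets \<eta>" using assms(2) by auto
  have "(\<integral>\<^sup>+x. f x \<partial>\<eta>) = (\<integral>\<^sup>+x. (\<Sum>s\<in>S. indicator {s} x * f s) \<partial>\<eta>)"
  proof (rule nn_integral_cong_AE)
    show "AE x in \<eta>. f x = (\<Sum>s\<in>S. indicator {s} x * f s)"
      using fin_supp_AE[OF assms] by eventually_elim (simp add: sum_ind_single[OF assms(3)])
  qed
  also have "\<dots> = (\<Sum>s\<in>S. \<integral>\<^sup>+x. indicator {s} x * f s \<partial>\<eta>)"
    by (rule nn_integral_sum) (use sing in auto)
  also have "\<dots> = (\<Sum>s\<in>S. f s * emeasure \<eta> {s})"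
  proof (intro sum.cong refl)
    fix s assume "s \<in> S"
    have "(\<integral>\<^sup>+x. indicator {s} x * f s \<partial>\<eta>) = (\<integral>\<^sup>+x. f s * indicator {s} x \<partial>\<eta>)"
      by (simp add: mult.commute)
    also have "\<dots> = f s * emeasure \<eta> {s}" using sing by (rule nn_integral_cmult_indicator)
    finally show "(\<integral>\<^sup>+x. indicator {s} x * f s \<partial>\<eta>) = f s * emeasure \<eta> {s}" .
  qed
  finally show ?thesis .
qed

lemma fin_supp_int:
  fixes f :: "'a::euclidean_space \<Rightarrow> real"
  assumes "prob_space \<eta>" "sets \<eta> = sets borel" "finite S" "emeasure \<eta> S = 1"
    and f: "f \<in> borel_measurable borel"
  shows "integrable \<eta> f" "(\<integral>x. f x \<partial>\<eta>) = (\<Sum>s\<in>S. f s * measure \<eta> {s})"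
proof -
  interpret prob_space \<eta> by fact
  have sing: "\<And>s. {s} \<in> sets \<eta>" using assms(2) by auto
  have ae: "AE x in \<eta>. f x = (\<Sum>s\<in>S. indicator {s} x * f s)"
    using fin_supp_AE[OF assms(1-4)] by eventually_elim (simp add: sum_ind_single[OF assms(3)])
  have fm: "f \<in> borel_measurable \<eta>" using f assms(2) by (simp cong: measurable_cong_sets)
  have int2: "integrable \<eta> (\<lambda>x. \<Sum>s\<in>S. indicator {s} x * f s)"
    by (intro Bochner_Integration.integrable_sum int_ind_const sing) unfold_locales
  have sm: "(\<lambda>x. \<Sum>s\<in>S. indicator {s} x * f s) \<in> borel_measurable \<eta>"
    using int2 by auto
  show "integrable \<eta> f"
    using integrable_cong_AE[OF fm sm ae] int2 by simp
  have "(\<integral>x. f x \<partial>\<eta>) = (\<integral>x. (\<Sum>s\<in>S. indicator {s} x * f s) \<partial>\<eta>)"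
    by (rule integral_cong_AE[OF fm sm ae])
  also have "\<dots> = (\<Sum>s\<in>S. \<integral>x. indicator {s} x * f s \<partial>\<eta>)"
    by (intro Bochner_Integration.integral_sum int_ind_const sing) unfold_locales
  also have "\<dots> = (\<Sum>s\<in>S. f s * measure \<eta> {s})"
    using sing by (intro sum.cong refl) auto
  finally show "(\<integral>x. f x \<partial>\<eta>) = (\<Sum>s\<in>S. f s * measure \<eta> {s})" .
qed


lemma subgrad:
  fixes \<phi> :: "'a::euclidean_space \<Rightarrow> real"
  assumes cvx: "convex_on UNIV \<phi>"
  shows "\<exists>g. \<forall>x. \<phi> c + inner g (x - c) \<le> \<phi> x"
proof -
  define T where "T = {z::'a\<times>real. \<phi> (fst z) < snd z}"
  have cT: "convex T"
    unfolding convex_def T_def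
  proof (clarsimp)
    fix a :: 'a and b :: real and a' :: 'a and b' :: real and u v :: real
    assume h: "\<phi> a < b" "\<phi> a' < b'" "0 \<le> u" "0 \<le> v" "u + v = 1"
    have uv: "u = 1 - v" using h by simp
    have "\<phi> (u *\<^sub>R a + v *\<^sub>R a') \<le> u * \<phi> a + v * \<phi> a'"
      using convex_onD[OF cvx, of v a a'] h unfolding uv by simp
    also have "\<dots> < u * b + v * b'"
    proof (cases "u = 0")
      case True then show ?thesis using h by simp
    next
      case False then have "u > 0" using h by simp
      then have "u * \<phi> a < u * b" using h by simp
      moreover have "v * \<phi> a' \<le> v * b'" using h by (simp add: mult_left_mono)
      ultimately show ?thesis by simp
    qed
    finally show "\<phi> (u *\<^sub>R a + v *\<^sub>R a') < u * b + v * b'" .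
  qed
  have "{(c, \<phi> c)} \<inter> T = {}" by (simp add: T_def)
  moreover have "(c, \<phi> c + 1) \<in> T" by (simp add: T_def)
  then have "T \<noteq> {}" by blast
  ultimately obtain a b where ab: "a \<noteq> 0" "\<forall>z\<in>{(c, \<phi> c)}. inner a z \<le> b" "\<forall>z\<in>T. inner a z \<ge> b"
    using separating_hyperplane_sets[of "{(c, \<phi> c)}" T] cT by auto
  obtain g \<alpha> where a: "a = (g, \<alpha>)" by (cases a)
  have 1: "inner g c + \<alpha> * \<phi> c \<le> b" using ab(2) a by simp
  have 2: "\<And>x t. \<phi> x < t \<Longrightarrow> b \<le> inner g x + \<alpha> * t" using ab(3) a by (auto simp: T_def)
  have "\<alpha> \<ge> 0"
  proof (rule ccontr)
    assume "\<not> \<alpha> \<ge> 0"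
    then have "\<alpha> < 0" by simp
    have "b \<le> inner g c + \<alpha> * (\<phi> c + 1)" using 2[of c "\<phi> c + 1"] by simp
    then show False using 1 \<open>\<alpha> < 0\<close> by (simp add: algebra_simps)
  qed
  moreover have "\<alpha> \<noteq> 0"
  proof
    assume "\<alpha> = 0"
    then have "b \<le> inner g (c - g)" using 2[of "c - g" "\<phi> (c - g) + 1"] by simp
    then have "inner g g \<le> 0" using 1 \<open>\<alpha> = 0\<close> by (simp add: inner_diff_right)
    then have "g = 0" using inner_ge_zero[of g] inner_eq_zero_iff[of g] by linarith
    then show False using ab(1) a \<open>\<alpha> = 0\<close> by (simp add: zero_prod_def)
  qed
  ultimately have "\<alpha> > 0" by simp
  show ?thesis
  proof (intro exI allI)
    fix x
    show "\<phi> c + inner (- (1/\<alpha>) *\<^sub>R g) (x - c) \<le> \<phi> x"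
    proof (rule ccontr)
      assume nt: "\<not> ?thesis"
      define K where "K = \<phi> c + inner (- (1/\<alpha>) *\<^sub>R g) (x - c)"
      have lt: "\<phi> x < K" using nt by (simp add: K_def)
      define t where "t = (\<phi> x + K) / 2"
      have "\<phi> x < t" using lt by (simp add: t_def)
      from 2[OF this] 1 have "inner g c + \<alpha> * \<phi> c \<le> inner g x + \<alpha> * t" by simp
      then have "K \<le> t"
        using \<open>\<alpha> > 0\<close> unfolding K_def by (simp add: inner_diff_right field_simps)
      then show False using lt unfolding t_def by (simp add: field_simps)
    qed
  qed
qed

locale qz =
  fixes \<mu> :: "'a::euclidean_space measure"
  assumes P2: "P2 \<mu>"
begin

sublocale prob_space \<mu> using P2 by (simp add: P2_def)

lemma sets_mu[measurable_cong]: "sets \<mu> = sets borel"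
  using P2 by (simp add: P2_def)

lemma space_mu[simp]: "space \<mu> = UNIV"
  using sets_eq_imp_space_eq[OF sets_mu] by simp

lemma meas_mu: "measurable \<mu> = measurable borel"
  by (intro ext measurable_cong_sets sets_mu refl)

lemma int_sq: "integrable \<mu> (\<lambda>x. norm x ^ 2)"
  using P2 by (simp add: P2_def)

lemma int_bound:
  fixes f :: "'a \<Rightarrow> 'b::{banach, second_countable_topology}"
  assumes "f \<in> borel_measurable borel" "\<And>x. norm (f x) \<le> c + d * norm x ^ 2"
  shows "integrable \<mu> f"
proof (rule Bochner_Integration.integrable_bound[where f="\<lambda>x. c + d * norm x ^ 2"])
  show "integrable \<mu> (\<lambda>x. c + d * norm x ^ 2)" using int_sq by simp
  show "f \<in> borel_measurable \<mu>" using assms(1) by (simp add: meas_mu)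
  show "AE x in \<mu>. norm (f x) \<le> norm (c + d * norm x ^ 2)"
    using assms(2) by (auto intro: order_trans[OF _ abs_ge_self])
qed

lemma norm_le_sq: "norm (x::'b::real_normed_vector) \<le> 1 + norm x ^ 2"
proof (cases "norm x \<le> 1")
  case True then show ?thesis using zero_le_power2[of "norm x"] by linarith
next
  case False then have "norm x * 1 \<le> norm x * norm x" by (intro mult_left_mono) auto
  then have "norm x \<le> norm x ^ 2" by (simp add: power2_eq_square)
  then show ?thesis by simp
qed

lemma int_id: "integrable \<mu> (\<lambda>x. x)"
  by (rule int_bound[where c=1 and d=1]) (auto intro: norm_le_sq)

lemma int_norm: "integrable \<mu> norm"
  using integrable_norm[OF int_id] by simp

lemma P1_mu: "P1 \<mu>"
  using int_norm sets_mu by (simp add: P1_def prob_space_axioms)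

lemma dist_sq_le: "dist (x::'a) y ^ 2 \<le> 2 * norm x ^ 2 + 2 * norm y ^ 2"
proof -
  have "dist x y \<le> norm x + norm y" by (simp add: dist_norm norm_triangle_ineq4)
  then have "dist x y ^ 2 \<le> (norm x + norm y) ^ 2" by (simp add: power_mono)
  also have "\<dots> \<le> 2 * norm x ^ 2 + 2 * norm y ^ 2"
    using zero_le_power2[of "norm x - norm y"] unfolding power2_sum power2_diff by linarith
  finally show ?thesis .
qed

lemma int_dist_sq: "integrable \<mu> (\<lambda>x. dist x s ^ 2)"
proof (rule int_bound[where c="2 * norm s ^ 2" and d=2])
  show "(\<lambda>x. dist x s ^ 2) \<in> borel_measurable borel" by measurable
  fix x
  have "dist x s ^ 2 \<le> 2 * norm x ^ 2 + 2 * norm s ^ 2" by (rule dist_sq_le)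
  then show "norm (dist x s ^ 2) \<le> 2 * norm s ^ 2 + 2 * norm x ^ 2" by simp
qed

end


lemma fst_borel: "(fst :: 'a::euclidean_space \<times> 'a \<Rightarrow> 'a) \<in> borel_measurable borel"
  by (intro borel_measurable_continuous_onI continuous_intros)
lemma snd_borel: "(snd :: 'a::euclidean_space \<times> 'a \<Rightarrow> 'a) \<in> borel_measurable borel"
  by (intro borel_measurable_continuous_onI continuous_intros)

lemma dist_sq_meas: "(\<lambda>z::'a::euclidean_space\<times>'a. dist (fst z) (snd z) ^ 2) \<in> borel_measurable borel"
  by (intro borel_measurable_continuous_onI continuous_intros)

lemma dist_sq_meas_enn: "(\<lambda>z::'a::euclidean_space\<times>'a. ennreal (dist (fst z) (snd z) ^ 2)) \<in> borel_measurable borel"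
  using dist_sq_meas by simp

context qz begin

definition balanced :: "('a \<Rightarrow> 'a) \<Rightarrow> 'a set \<Rightarrow> bool" where
  "balanced q R \<longleftrightarrow> q \<in> borel_measurable borel \<and> finite R \<and> (\<forall>x. q x \<in> R) \<and>
     (\<forall>s\<in>R. (\<integral>x. indicator (q -` {s}) x *\<^sub>R (x - s) \<partial>\<mu>) = 0)"

lemma cell_sets: "q \<in> borel_measurable borel \<Longrightarrow> q -` A \<in> sets borel" if "A \<in> sets borel"
  using measurable_sets_borel that by blast

lemma cell_sets2: "(q::'a\<Rightarrow>'a) \<in> borel_measurable borel \<Longrightarrow> q -` {s} \<in> sets borel"
  by (erule measurable_sets_borel) simp

lemma int_ind: "A \<in> sets borel \<Longrightarrow> integrable \<mu> f \<Longrightarrow> integrable \<mu> (\<lambda>x. indicator A x * (f x :: real))"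
  using integrable_mult_indicator[of A \<mu> f] by (simp add: sets_mu)

lemma int_indc: "A \<in> sets borel \<Longrightarrow> integrable \<mu> (\<lambda>x. indicator A x * (c :: real))"
  using int_ind_const[of \<mu> A c] sets_mu finite_measure_axioms by simp

lemma dec_pt:
  assumes "finite R" "\<forall>x. q x \<in> R"
  shows "h (q x) x = (\<Sum>s\<in>R. indicator (q -` {s}) x * (h s x :: real))"
proof -
  have "(\<Sum>s\<in>R. indicator (q -` {s}) x * h s x) = (\<Sum>s\<in>R. if q x = s then h (q x) x else 0)"
    by (intro sum.cong) (auto simp: indicator_def)
  also have "\<dots> = h (q x) x" using assms by simp
  finally show ?thesis by simp
qed

lemma dec:
  fixes h :: "'a \<Rightarrow> 'a \<Rightarrow> real"
  assumes "finite R" "\<forall>x. q x \<in> R"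
    and int: "\<And>s. s \<in> R \<Longrightarrow> integrable \<mu> (\<lambda>x. indicator (q -` {s}) x * h s x)"
  shows "integrable \<mu> (\<lambda>x. h (q x) x)"
    "(\<integral>x. h (q x) x \<partial>\<mu>) = (\<Sum>s\<in>R. \<integral>x. indicator (q -` {s}) x * h s x \<partial>\<mu>)"
proof -
  have eq: "(\<lambda>x. h (q x) x) = (\<lambda>x. \<Sum>s\<in>R. indicator (q -` {s}) x * h s x)"
    using dec_pt[OF assms(1,2)] by (intro ext) blast
  show "integrable \<mu> (\<lambda>x. h (q x) x)"
    unfolding eq by (intro Bochner_Integration.integrable_sum int)
  show "(\<integral>x. h (q x) x \<partial>\<mu>) = (\<Sum>s\<in>R. \<integral>x. indicator (q -` {s}) x * h s x \<partial>\<mu>)"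
    unfolding eq by (intro Bochner_Integration.integral_sum int)
qed

lemma int_shift: "integrable \<mu> (\<lambda>x. x - s)"
  using int_id by simp

lemma bal_inner:
  assumes "balanced q R"
  shows "integrable \<mu> (\<lambda>x. inner (G (q x)) (x - q x))" "(\<integral>x. inner (G (q x)) (x - q x) \<partial>\<mu>) = 0"
proof -
  have q: "q \<in> borel_measurable borel" "finite R" "\<forall>x. q x \<in> R"
    and b: "\<And>s. s \<in> R \<Longrightarrow> (\<integral>x. indicator (q -` {s}) x *\<^sub>R (x - s) \<partial>\<mu>) = 0"
    using assms by (auto simp: balanced_def)
  have C: "\<And>s. q -` {s} \<in> sets \<mu>" using cell_sets[OF _ q(1)] sets_mu by simp
  have eqf: "\<And>s x. indicator (q -` {s}) x * inner (G s) (x - s) = inner (G s) (indicator (q -` {s}) x *\<^sub>R (x - s))"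
    by (simp add: inner_scaleR_right)
  have i1: "\<And>s. integrable \<mu> (\<lambda>x. indicator (q -` {s}) x *\<^sub>R (x - s))"
    by (rule integrable_mult_indicator[OF C int_shift])
  have i2: "\<And>s. integrable \<mu> (\<lambda>x. indicator (q -` {s}) x * inner (G s) (x - s))"
    unfolding eqf using i1 by (rule integrable_inner_right)
  show "integrable \<mu> (\<lambda>x. inner (G (q x)) (x - q x))"
    using dec(1)[OF q(2,3), of "\<lambda>s x. inner (G s) (x - s)"] i2 by simp
  have "(\<integral>x. inner (G (q x)) (x - q x) \<partial>\<mu>) = (\<Sum>s\<in>R. \<integral>x. indicator (q -` {s}) x * inner (G s) (x - s) \<partial>\<mu>)"
    using dec(2)[OF q(2,3), of "\<lambda>s x. inner (G s) (x - s)"] i2 by simp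
  also have "\<dots> = (\<Sum>s\<in>R. inner (G s) (\<integral>x. indicator (q -` {s}) x *\<^sub>R (x - s) \<partial>\<mu>))"
    unfolding eqf using i1 by (intro sum.cong refl integral_inner_right)
  also have "\<dots> = 0" using b by simp
  finally show "(\<integral>x. inner (G (q x)) (x - q x) \<partial>\<mu>) = 0" .
qed

lemma bal_cvx:
  fixes \<phi> :: "'a \<Rightarrow> real"
  assumes "balanced q R" "convex_on UNIV \<phi>" "integrable \<mu> \<phi>"
  shows "integrable \<mu> (\<lambda>x. \<phi> (q x))" "(\<integral>x. \<phi> (q x) \<partial>\<mu>) \<le> (\<integral>x. \<phi> x \<partial>\<mu>)"
proof -
  have q: "q \<in> borel_measurable borel" "finite R" "\<forall>x. q x \<in> R"
    using assms by (auto simp: balanced_def)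
  define G where "G s = (SOME g. \<forall>x. \<phi> s + inner g (x - s) \<le> \<phi> x)" for s
  have G: "\<phi> s + inner (G s) (x - s) \<le> \<phi> x" for s x
    using someI_ex[OF subgrad[OF assms(2), of s]] unfolding G_def by blast
  show i: "integrable \<mu> (\<lambda>x. \<phi> (q x))"
    using dec(1)[OF q(2,3), of "\<lambda>s x. \<phi> s", OF int_indc[OF cell_sets2[OF q(1)]]] by simp
  note bi = bal_inner[OF assms(1), of G]
  have "(\<integral>x. \<phi> (q x) \<partial>\<mu>) = (\<integral>x. \<phi> (q x) + inner (G (q x)) (x - q x) \<partial>\<mu>)"
    using i bi by simp
  also have "\<dots> \<le> (\<integral>x. \<phi> x \<partial>\<mu>)"
    by (intro integral_mono Bochner_Integration.integrable_add i bi assms(3) G)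
  finally show "(\<integral>x. \<phi> (q x) \<partial>\<mu>) \<le> (\<integral>x. \<phi> x \<partial>\<mu>)" .
qed


lemma bal_basic:
  assumes "balanced q R"
  shows "prob_space (distr \<mu> borel q)" "sets (distr \<mu> borel q) = sets borel"
    "emeasure (distr \<mu> borel q) R = 1" "finite R" "q \<in> borel_measurable \<mu>"
proof -
  have q: "q \<in> borel_measurable borel" "finite R" "\<forall>x. q x \<in> R"
    using assms by (auto simp: balanced_def)
  then show qm: "q \<in> borel_measurable \<mu>" by (simp add: meas_mu)
  show "prob_space (distr \<mu> borel q)" by (rule prob_space_distr[OF qm])
  show "sets (distr \<mu> borel q) = sets borel" by simp
  have "emeasure (distr \<mu> borel q) R = emeasure \<mu> (q -` R \<inter> space \<mu>)"
    using qm q(2) fin_borel by (intro emeasure_distr) auto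
  also have "q -` R \<inter> space \<mu> = space \<mu>" using q(3) by auto
  finally show "emeasure (distr \<mu> borel q) R = 1" using emeasure_space_1 by simp
  show "finite R" by fact
qed

lemma bal_Pcvx:
  assumes "balanced q R" "card R \<le> N"
  shows "distr \<mu> borel q \<in> Pcvx \<mu> N"
proof -
  note bb = bal_basic[OF assms(1)]
  have PN: "distr \<mu> borel q \<in> PN N"
    unfolding PN_def using bb assms(2) by auto
  have P1: "P1 (distr \<mu> borel q)"
    unfolding P1_def using bb fin_supp_int(1)[OF bb(1,2,4,3), of norm] by auto
  have "cvx_le (distr \<mu> borel q) \<mu>"
    unfolding cvx_le_def
  proof (intro conjI P1 P1_mu allI impI)
    fix \<phi> :: "'a \<Rightarrow> real" assume cvx: "convex_on UNIV \<phi>" and i: "integrable \<mu> \<phi>"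
    have phm: "\<phi> \<in> borel_measurable borel"
      using convex_measurable[of "\<lambda>x. x" borel UNIV \<phi>] cvx by simp
    show "integrable (distr \<mu> borel q) \<phi>" by (rule fin_supp_int(1)[OF bb(1,2,4,3) phm])
    have "(\<integral>x. \<phi> x \<partial>distr \<mu> borel q) = (\<integral>x. \<phi> (q x) \<partial>\<mu>)"
      by (rule integral_distr[OF bb(5) phm])
    also have "\<dots> \<le> (\<integral>x. \<phi> x \<partial>\<mu>)" by (rule bal_cvx(2)[OF assms(1) cvx i])
    finally show "(\<integral>x. \<phi> x \<partial>distr \<mu> borel q) \<le> (\<integral>x. \<phi> x \<partial>\<mu>)" .
  qed
  then show ?thesis using PN by (simp add: Pcvx_def)
qed

lemma int_dist_q:
  assumes "q \<in> borel_measurable borel" "finite R" "\<forall>x. q x \<in> R"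
  shows "integrable \<mu> (\<lambda>x. dist x (q x) ^ 2)"
  using dec(1)[OF assms(2,3), of "\<lambda>s x. dist x s ^ 2", OF int_ind[OF cell_sets2[OF assms(1)] int_dist_sq]]
  by simp

lemma bal_m2:
  assumes "balanced q R"
  shows "(\<integral>x. norm x ^ 2 \<partial>distr \<mu> borel q) = (\<integral>x. norm x ^ 2 \<partial>\<mu>) - (\<integral>x. dist x (q x) ^ 2 \<partial>\<mu>)"
proof -
  have q: "q \<in> borel_measurable borel" "finite R" "\<forall>x. q x \<in> R"
    using assms by (auto simp: balanced_def)
  note bb = bal_basic[OF assms(1)]
  have i1: "integrable \<mu> (\<lambda>x. dist x (q x) ^ 2)" by (rule int_dist_q[OF q])
  have i2: "integrable \<mu> (\<lambda>x. norm (q x) ^ 2)"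
    using dec(1)[OF q(2,3), of "\<lambda>s x. norm s ^ 2", OF int_indc[OF cell_sets2[OF q(1)]]] by simp
  note i3 = bal_inner[OF assms(1), of "\<lambda>s. 2 *\<^sub>R s"]
  have pt: "norm x ^ 2 = dist x (q x) ^ 2 + inner (2 *\<^sub>R q x) (x - q x) + norm (q x) ^ 2" for x
    by (simp add: dist_norm power2_norm_eq_inner inner_diff_left inner_diff_right inner_commute[of "q x" x] algebra_simps)
  have A: "(\<integral>x. norm x ^ 2 \<partial>distr \<mu> borel q) = (\<integral>x. norm (q x) ^ 2 \<partial>\<mu>)"
    by (rule integral_distr[OF bb(5)]) measurable
  have "(\<integral>x. norm x ^ 2 \<partial>\<mu>) = (\<integral>x. dist x (q x) ^ 2 + inner (2 *\<^sub>R q x) (x - q x) + norm (q x) ^ 2 \<partial>\<mu>)"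
    by (rule Bochner_Integration.integral_cong[OF refl]) (rule pt)
  also have "\<dots> = (\<integral>x. dist x (q x) ^ 2 + inner (2 *\<^sub>R q x) (x - q x) \<partial>\<mu>) + (\<integral>x. norm (q x) ^ 2 \<partial>\<mu>)"
    by (rule Bochner_Integration.integral_add[OF Bochner_Integration.integrable_add[OF i1 i3(1)] i2])
  also have "(\<integral>x. dist x (q x) ^ 2 + inner (2 *\<^sub>R q x) (x - q x) \<partial>\<mu>) = (\<integral>x. dist x (q x) ^ 2 \<partial>\<mu>) + (\<integral>x. inner (2 *\<^sub>R q x) (x - q x) \<partial>\<mu>)"
    by (rule Bochner_Integration.integral_add[OF i1 i3(1)])
  finally have B: "(\<integral>x. norm x ^ 2 \<partial>\<mu>) = (\<integral>x. dist x (q x) ^ 2 \<partial>\<mu>) + (\<integral>x. inner (2 *\<^sub>R q x) (x - q x) \<partial>\<mu>) + (\<integral>x. norm (q x) ^ 2 \<partial>\<mu>)" .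
  show ?thesis using A B i3(2) by simp
qed

lemma pair_meas: "(q::'a\<Rightarrow>'a) \<in> borel_measurable borel \<Longrightarrow> (\<lambda>x. (x, q x)) \<in> \<mu> \<rightarrow>\<^sub>M borel"
  unfolding meas_mu by (rule borel_measurable_Pair[OF measurable_ident_sets[OF refl]])

lemma cpl_q:
  assumes "q \<in> borel_measurable borel"
  shows "distr \<mu> borel (\<lambda>x. (x, q x)) \<in> couplings \<mu> (distr \<mu> borel q)"
proof -
  have m: "(\<lambda>x. (x, q x)) \<in> \<mu> \<rightarrow>\<^sub>M borel" by (rule pair_meas[OF assms])
  have "distr (distr \<mu> borel (\<lambda>x. (x, q x))) borel fst = distr \<mu> borel (fst \<circ> (\<lambda>x. (x, q x)))"
    by (rule distr_distr[OF fst_borel m])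
  also have "\<dots> = \<mu>" by (simp add: o_def distr_id2 sets_mu)
  finally have 1: "distr (distr \<mu> borel (\<lambda>x. (x, q x))) borel fst = \<mu>" .
  have "distr (distr \<mu> borel (\<lambda>x. (x, q x))) borel snd = distr \<mu> borel (snd \<circ> (\<lambda>x. (x, q x)))"
    by (rule distr_distr[OF snd_borel m])
  then have 2: "distr (distr \<mu> borel (\<lambda>x. (x, q x))) borel snd = distr \<mu> borel q" by (simp add: o_def)
  show ?thesis using 1 2 by (simp add: couplings_def)
qed

lemma W2_le_cost:
  assumes "\<pi> \<in> couplings \<mu>' \<nu>" "(\<integral>\<^sup>+ z. ennreal ((dist (fst z) (snd z))^2) \<partial>\<pi>) = ennreal c" "c \<ge> 0"
  shows "W2 \<mu>' \<nu> \<le> sqrt c"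
proof -
  have "(INF \<pi>\<in>couplings \<mu>' \<nu>. \<integral>\<^sup>+ z. ennreal ((dist (fst z) (snd z))^2) \<partial>\<pi>) \<le> ennreal c"
    by (rule INF_lower2[OF assms(1)]) (simp add: assms(2))
  then have "enn2real (INF \<pi>\<in>couplings \<mu>' \<nu>. \<integral>\<^sup>+ z. ennreal ((dist (fst z) (snd z))^2) \<partial>\<pi>) \<le> c"
    using assms(3) by (simp add: enn2real_leI)
  then show ?thesis unfolding W2_def by simp
qed

lemma bal_W2:
  assumes "balanced q R"
  shows "W2 \<mu> (distr \<mu> borel q) \<le> sqrt (\<integral>x. dist x (q x) ^ 2 \<partial>\<mu>)"
proof -
  have q: "q \<in> borel_measurable borel" "finite R" "\<forall>x. q x \<in> R"
    using assms by (auto simp: balanced_def)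
  have m: "(\<lambda>x. (x, q x)) \<in> \<mu> \<rightarrow>\<^sub>M borel" by (rule pair_meas[OF q(1)])
  have "(\<integral>\<^sup>+ z. ennreal ((dist (fst z) (snd z))^2) \<partial>distr \<mu> borel (\<lambda>x. (x, q x)))
      = (\<integral>\<^sup>+ x. ennreal (dist x (q x) ^ 2) \<partial>\<mu>)"
  proof -
    note mm = dist_sq_meas_enn
    have mm2: "(\<lambda>z::'a\<times>'a. ennreal ((dist (fst z) (snd z))^2)) \<in> borel_measurable (distr \<mu> borel (\<lambda>x. (x, q x)))"
      using mm by (simp add: measurable_distr_eq1)
    show ?thesis using nn_integral_distr[OF m mm2] by simp
  qed
  also have "\<dots> = ennreal (\<integral>x. dist x (q x) ^ 2 \<partial>\<mu>)"
    by (rule nn_integral_eq_integral[OF int_dist_q[OF q]]) simp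
  finally show ?thesis
    by (intro W2_le_cost[OF cpl_q[OF q(1)]]) (auto intro: integral_nonneg_AE)
qed

end


lemma dist_sq_le_g: "dist (x::'a::real_normed_vector) y ^ 2 \<le> 2 * norm x ^ 2 + 2 * norm y ^ 2"
proof -
  have "dist x y \<le> norm x + norm y" by (simp add: dist_norm norm_triangle_ineq4)
  then have "dist x y ^ 2 \<le> (norm x + norm y) ^ 2" by (simp add: power_mono)
  also have "\<dots> \<le> 2 * norm x ^ 2 + 2 * norm y ^ 2"
    using zero_le_power2[of "norm x - norm y"] unfolding power2_sum power2_diff by linarith
  finally show ?thesis .
qed

lemma cpl_basic:
  assumes "\<pi> \<in> couplings A B"
  shows "sets \<pi> = sets borel" "distr \<pi> borel fst = A" "distr \<pi> borel snd = B"
  using assms by (auto simp: couplings_def)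

lemma cpl_marg_fst:
  fixes \<pi> :: "('a::euclidean_space \<times> 'a) measure"
  assumes "\<pi> \<in> couplings A B" "f \<in> borel_measurable borel"
  shows "(\<integral>\<^sup>+z. f (fst z) \<partial>\<pi>) = (\<integral>\<^sup>+x. f x \<partial>A)"
proof -
  note c = cpl_basic[OF assms(1)]
  have m: "fst \<in> \<pi> \<rightarrow>\<^sub>M borel" using fst_borel c(1) by (simp cong: measurable_cong_sets)
  have "(\<integral>\<^sup>+x. f x \<partial>distr \<pi> borel fst) = (\<integral>\<^sup>+z. f (fst z) \<partial>\<pi>)"
    by (rule nn_integral_distr[OF m]) (use assms(2) in simp)
  then show ?thesis using c(2) by simp
qed

lemma cpl_marg_snd:
  fixes \<pi> :: "('a::euclidean_space \<times> 'a) measure"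
  assumes "\<pi> \<in> couplings A B" "f \<in> borel_measurable borel"
  shows "(\<integral>\<^sup>+z. f (snd z) \<partial>\<pi>) = (\<integral>\<^sup>+x. f x \<partial>B)"
proof -
  note c = cpl_basic[OF assms(1)]
  have m: "snd \<in> \<pi> \<rightarrow>\<^sub>M borel" using snd_borel c(1) by (simp cong: measurable_cong_sets)
  have "(\<integral>\<^sup>+x. f x \<partial>distr \<pi> borel snd) = (\<integral>\<^sup>+z. f (snd z) \<partial>\<pi>)"
    by (rule nn_integral_distr[OF m]) (use assms(2) in simp)
  then show ?thesis using c(3) by simp
qed

lemma cpl_AE_snd:
  fixes \<pi> :: "('a::euclidean_space \<times> 'a) measure"
  assumes "\<pi> \<in> couplings A B" "AE y in B. y \<in> S" "S \<in> sets borel"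
  shows "AE z in \<pi>. snd z \<in> S"
proof -
  note c = cpl_basic[OF assms(1)]
  have m: "snd \<in> \<pi> \<rightarrow>\<^sub>M borel" using snd_borel c(1) by (simp cong: measurable_cong_sets)
  have "AE y in distr \<pi> borel snd. y \<in> S" unfolding c(3) by (fact assms(2))
  then show ?thesis by (subst (asm) AE_distr_iff[OF m]) (use assms(3) in auto)
qed

lemma cpl_AE_fst:
  fixes \<pi> :: "('a::euclidean_space \<times> 'a) measure"
  assumes "\<pi> \<in> couplings A B" "AE y in A. y \<in> S" "S \<in> sets borel"
  shows "AE z in \<pi>. fst z \<in> S"
proof -
  note c = cpl_basic[OF assms(1)]
  have m: "fst \<in> \<pi> \<rightarrow>\<^sub>M borel" using fst_borel c(1) by (simp cong: measurable_cong_sets)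
  have "AE y in distr \<pi> borel fst. y \<in> S" unfolding c(2) by (fact assms(2))
  then show ?thesis by (subst (asm) AE_distr_iff[OF m]) (use assms(3) in auto)
qed

lemma norm_sq_meas: "(\<lambda>x::'a::euclidean_space. ennreal (norm x ^ 2)) \<in> borel_measurable borel"
  by measurable

lemma cpl_cost_bound:
  fixes \<pi> :: "('a::euclidean_space \<times> 'a) measure"
  assumes "\<pi> \<in> couplings A B"
  shows "(\<integral>\<^sup>+ z. ennreal ((dist (fst z) (snd z))^2) \<partial>\<pi>)
     \<le> 2 * (\<integral>\<^sup>+x. ennreal (norm x ^ 2) \<partial>A) + 2 * (\<integral>\<^sup>+x. ennreal (norm x ^ 2) \<partial>B)"
proof -
  note c = cpl_basic[OF assms(1)]
  have "(\<integral>\<^sup>+ z. ennreal ((dist (fst z) (snd z))^2) \<partial>\<pi>)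
     \<le> (\<integral>\<^sup>+ z. 2 * ennreal (norm (fst z) ^ 2) + 2 * ennreal (norm (snd z) ^ 2) \<partial>\<pi>)"
  proof (rule nn_integral_mono)
    fix z :: "'a \<times> 'a"
    have "ennreal ((dist (fst z) (snd z))^2) \<le> ennreal (2 * norm (fst z) ^ 2 + 2 * norm (snd z) ^ 2)"
      by (rule ennreal_leI[OF dist_sq_le_g])
    also have "\<dots> = 2 * ennreal (norm (fst z) ^ 2) + 2 * ennreal (norm (snd z) ^ 2)"
      by (simp add: ennreal_plus ennreal_mult)
    finally show "ennreal ((dist (fst z) (snd z))^2) \<le> 2 * ennreal (norm (fst z) ^ 2) + 2 * ennreal (norm (snd z) ^ 2)" .
  qed
  also have "\<dots> = 2 * (\<integral>\<^sup>+ z. ennreal (norm (fst z) ^ 2) \<partial>\<pi>) + 2 * (\<integral>\<^sup>+ z. ennreal (norm (snd z) ^ 2) \<partial>\<pi>)"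
  proof -
    have f1: "(\<lambda>z::'a\<times>'a. norm (fst z)^2) \<in> borel_measurable borel"
      by (intro borel_measurable_continuous_onI continuous_intros)
    have f2: "(\<lambda>z::'a\<times>'a. norm (snd z)^2) \<in> borel_measurable borel"
      by (intro borel_measurable_continuous_onI continuous_intros)
    have g1: "(\<lambda>z::'a\<times>'a. ennreal (norm (fst z)^2)) \<in> borel_measurable \<pi>" using f1 c(1) by (simp cong: measurable_cong_sets)
    have g2: "(\<lambda>z::'a\<times>'a. ennreal (norm (snd z)^2)) \<in> borel_measurable \<pi>" using f2 c(1) by (simp cong: measurable_cong_sets)
    show ?thesis
      using g1 g2 by (subst nn_integral_add) (auto simp: nn_integral_cmult)
  qed
  also have "\<dots> = 2 * (\<integral>\<^sup>+x. ennreal (norm x ^ 2) \<partial>A) + 2 * (\<integral>\<^sup>+x. ennreal (norm x ^ 2) \<partial>B)"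
    using cpl_marg_fst[OF assms norm_sq_meas] cpl_marg_snd[OF assms norm_sq_meas] by simp
  finally show ?thesis .
qed

lemma prod_cpl:
  fixes A B :: "'a::euclidean_space measure"
  assumes "prob_space A" "prob_space B" "sets A = sets borel" "sets B = sets borel"
  shows "A \<Otimes>\<^sub>M B \<in> couplings A B"
proof -
  interpret pair_prob_space A B using assms(1,2) by (simp add: pair_prob_space_def pair_sigma_finite_def prob_space_imp_sigma_finite)
  have sA: "space A = UNIV" using sets_eq_imp_space_eq[OF assms(3)] by simp
  have sB: "space B = UNIV" using sets_eq_imp_space_eq[OF assms(4)] by simp
  have s: "sets (A \<Otimes>\<^sub>M B) = sets borel"
    using sets_pair_measure_cong[OF assms(3,4)] borel_prod by metis
  have m1: "fst \<in> A \<Otimes>\<^sub>M B \<rightarrow>\<^sub>M borel" using fst_borel s by (simp cong: measurable_cong_sets)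
  have m2: "snd \<in> A \<Otimes>\<^sub>M B \<rightarrow>\<^sub>M borel" using snd_borel s by (simp cong: measurable_cong_sets)
  have d1: "distr (A \<Otimes>\<^sub>M B) borel fst = A"
  proof (rule measure_eqI)
    show "sets (distr (A \<Otimes>\<^sub>M B) borel fst) = sets A" using assms(3) by simp
    fix X assume "X \<in> sets (distr (A \<Otimes>\<^sub>M B) borel fst)"
    then have X: "X \<in> sets A" using assms(3) by simp
    have "emeasure (distr (A \<Otimes>\<^sub>M B) borel fst) X = emeasure (A \<Otimes>\<^sub>M B) (fst -` X \<inter> space (A \<Otimes>\<^sub>M B))"
      using X assms(3) by (intro emeasure_distr[OF m1]) auto
    also have "fst -` X \<inter> space (A \<Otimes>\<^sub>M B) = X \<times> space B" by (auto simp: space_pair_measure sA sB)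
    also have "emeasure (A \<Otimes>\<^sub>M B) (X \<times> space B) = emeasure A X * emeasure B (space B)"
      using X by (intro M2.emeasure_pair_measure_Times) auto
    finally show "emeasure (distr (A \<Otimes>\<^sub>M B) borel fst) X = emeasure A X"
      by (simp add: M2.emeasure_space_1)
  qed
  have d2: "distr (A \<Otimes>\<^sub>M B) borel snd = B"
  proof (rule measure_eqI)
    show "sets (distr (A \<Otimes>\<^sub>M B) borel snd) = sets B" using assms(4) by simp
    fix X assume "X \<in> sets (distr (A \<Otimes>\<^sub>M B) borel snd)"
    then have X: "X \<in> sets B" using assms(4) by simp
    have "emeasure (distr (A \<Otimes>\<^sub>M B) borel snd) X = emeasure (A \<Otimes>\<^sub>M B) (snd -` X \<inter> space (A \<Otimes>\<^sub>M B))"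
      using X assms(4) by (intro emeasure_distr[OF m2]) auto
    also have "snd -` X \<inter> space (A \<Otimes>\<^sub>M B) = space A \<times> X" by (auto simp: space_pair_measure sA sB)
    also have "emeasure (A \<Otimes>\<^sub>M B) (space A \<times> X) = emeasure A (space A) * emeasure B X"
      using X by (intro M2.emeasure_pair_measure_Times) auto
    finally show "emeasure (distr (A \<Otimes>\<^sub>M B) borel snd) X = emeasure B X"
      by (simp add: M1.emeasure_space_1)
  qed
  show ?thesis using s d1 d2 by (simp add: couplings_def)
qed

lemma INF_cost_fin:
  fixes A B :: "'a::euclidean_space measure"
  assumes "prob_space A" "prob_space B" "sets A = sets borel" "sets B = sets borel"
    and "(\<integral>\<^sup>+x. ennreal (norm x ^ 2) \<partial>A) < \<infinity>" "(\<integral>\<^sup>+x. ennreal (norm x ^ 2) \<partial>B) < \<infinity>"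
  shows "(INF \<pi>\<in>couplings A B. \<integral>\<^sup>+ z. ennreal ((dist (fst z) (snd z))^2) \<partial>\<pi>) < \<infinity>"
proof -
  have "(INF \<pi>\<in>couplings A B. \<integral>\<^sup>+ z. ennreal ((dist (fst z) (snd z))^2) \<partial>\<pi>)
     \<le> 2 * (\<integral>\<^sup>+x. ennreal (norm x ^ 2) \<partial>A) + 2 * (\<integral>\<^sup>+x. ennreal (norm x ^ 2) \<partial>B)"
    by (rule INF_lower2[OF prod_cpl[OF assms(1-4)]]) (rule cpl_cost_bound[OF prod_cpl[OF assms(1-4)]])
  also have "\<dots> < \<infinity>" using assms(5,6) by (simp add: ennreal_mult_less_top)
  finally show ?thesis .
qed

lemma fin_supp_m2_fin:
  fixes \<eta> :: "'a::euclidean_space measure"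
  assumes "prob_space \<eta>" "sets \<eta> = sets borel" "finite S" "emeasure \<eta> S = 1"
  shows "(\<integral>\<^sup>+x. ennreal (norm x ^ 2) \<partial>\<eta>) < \<infinity>"
proof -
  interpret prob_space \<eta> by fact
  show ?thesis using fin_supp_nn[OF assms] assms(3) by (simp add: ennreal_mult_less_top emeasure_eq_measure flip: ennreal_mult)
qed


lemma infd_meas: "(\<lambda>x::'a::euclidean_space. infdist x S ^ 2) \<in> borel_measurable borel"
  by (intro borel_measurable_continuous_onI continuous_intros)

lemma cvx_Max_affine:
  fixes a :: "'i \<Rightarrow> 'a::euclidean_space" and b :: "'i \<Rightarrow> real"
  assumes "finite S" "S \<noteq> {}"
  shows "convex_on UNIV (\<lambda>x. Max ((\<lambda>s. inner (a s) x + b s) ` S))"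
proof (rule convex_onI)
  show "convex (UNIV :: 'a set)" by simp
  fix t :: real and x y :: 'a assume t: "0 < t" "t < 1"
  define z where "z = (1 - t) *\<^sub>R x + t *\<^sub>R y"
  have "Max ((\<lambda>s. inner (a s) z + b s) ` S) \<in> (\<lambda>s. inner (a s) z + b s) ` S"
    using assms by (intro Max_in) auto
  then obtain s where s: "s \<in> S" "Max ((\<lambda>s. inner (a s) z + b s) ` S) = inner (a s) z + b s" by auto
  have "inner (a s) z + b s = (1 - t) * (inner (a s) x + b s) + t * (inner (a s) y + b s)"
    unfolding z_def by (simp add: inner_add_right algebra_simps)
  also have "\<dots> \<le> (1 - t) * Max ((\<lambda>s. inner (a s) x + b s) ` S) + t * Max ((\<lambda>s. inner (a s) y + b s) ` S)"
    using t s(1) assms(1) by (intro add_mono mult_left_mono Max_ge) auto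
  finally show "Max ((\<lambda>s. inner (a s) ((1 - t) *\<^sub>R x + t *\<^sub>R y) + b s) ` S)
    \<le> (1 - t) * Max ((\<lambda>s. inner (a s) x + b s) ` S) + t * Max ((\<lambda>s. inner (a s) y + b s) ` S)"
    using s(2) unfolding z_def by simp
qed

lemma inner_dist_id: "inner (2 *\<^sub>R s) x - norm s ^ 2 = norm x ^ 2 - dist x (s::'a::euclidean_space) ^ 2"
  by (simp add: dist_norm power2_norm_eq_inner inner_diff_left inner_diff_right inner_commute[of s x] algebra_simps)

context qz begin

definition Dst :: "'a set \<Rightarrow> real" where
  "Dst S = (\<integral>x. infdist x S ^ 2 \<partial>\<mu>)"

lemma int_infd:
  assumes "S \<noteq> {}"
  shows "integrable \<mu> (\<lambda>x. infdist x S ^ 2)"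
proof -
  obtain s0 where s0: "s0 \<in> S" using assms by auto
  show ?thesis
  proof (rule int_bound[where c="2 * norm s0 ^ 2" and d=2])
    show "(\<lambda>x. infdist x S ^ 2) \<in> borel_measurable borel" by (rule infd_meas)
    fix x
    have "infdist x S ^ 2 \<le> dist x s0 ^ 2"
      using power_mono[OF infdist_le[OF s0] infdist_nonneg] .
    also have "\<dots> \<le> 2 * norm x ^ 2 + 2 * norm s0 ^ 2" by (rule dist_sq_le)
    finally show "norm (infdist x S ^ 2) \<le> 2 * norm s0 ^ 2 + 2 * norm x ^ 2" by simp
  qed
qed

lemma Dst_nonneg: "Dst S \<ge> 0"
  unfolding Dst_def by (rule integral_nonneg_AE) simp

lemma distortion_eq:
  assumes "S \<noteq> {}"
  shows "distortion \<mu> S = ennreal (Dst S)"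
  unfolding distortion_def Dst_def
  by (rule nn_integral_eq_integral[OF int_infd[OF assms]]) simp

lemma m2_mu_fin: "(\<integral>\<^sup>+x. ennreal (norm x ^ 2) \<partial>\<mu>) < \<infinity>"
  using nn_integral_eq_integral[OF int_sq] by simp

lemma U_sets: "{x::'a. dist x \<gamma> ^ 2 - \<epsilon> < infdist x S ^ 2} \<in> sets borel"
proof -
  have f: "(\<lambda>x::'a. dist x \<gamma> ^ 2 - \<epsilon> - infdist x S ^ 2) \<in> borel_measurable borel"
    by (intro borel_measurable_continuous_onI continuous_intros)
  have "{x. dist x \<gamma> ^ 2 - \<epsilon> < infdist x S ^ 2} = (\<lambda>x::'a. dist x \<gamma> ^ 2 - \<epsilon> - infdist x S ^ 2) -` {..<0}"
    by auto
  also have "\<dots> \<in> sets borel" by (rule measurable_sets_borel[OF f]) simp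
  finally show ?thesis .
qed

lemma ennreal_ind: "ennreal c * indicator A x = ennreal (c * indicator A x)"
  by (simp split: split_indicator)

lemma F1gen:
  fixes \<gamma> :: 'a and \<epsilon> :: real
  assumes pi: "\<pi> \<in> couplings \<mu> \<eta>" and eta: "prob_space \<eta>" "sets \<eta> = sets borel" "finite S" "emeasure \<eta> S = 1"
    and eps: "\<epsilon> \<ge> 0"
  defines "U \<equiv> {x. dist x \<gamma> ^ 2 - \<epsilon> < infdist x S ^ 2}"
  shows "ennreal (Dst S + \<epsilon> * measure \<eta> {\<gamma>})
     \<le> (\<integral>\<^sup>+ z. ennreal ((dist (fst z) (snd z))^2) \<partial>\<pi>) + ennreal (\<epsilon> * measure \<mu> U)"
proof -
  interpret E: prob_space \<eta> by fact
  have Sne: "S \<noteq> {}" using eta(4) by auto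
  note c = cpl_basic[OF pi]
  have U: "U \<in> sets borel" unfolding U_def by (rule U_sets)
  have aeS: "AE z in \<pi>. snd z \<in> S"
    by (rule cpl_AE_snd[OF pi fin_supp_AE[OF eta] fin_borel[OF eta(3)]])
  have pw: "ennreal (infdist (fst z) S ^ 2) + ennreal \<epsilon> * indicator {\<gamma>} (snd z)
      \<le> ennreal ((dist (fst z) (snd z))^2) + ennreal \<epsilon> * indicator U (fst z)" if zS: "snd z \<in> S" for z
  proof -
    have i1: "infdist (fst z) S ^ 2 \<le> dist (fst z) (snd z) ^ 2"
      using power_mono[OF infdist_le[OF zS] infdist_nonneg] .
    have "infdist (fst z) S ^ 2 + \<epsilon> * indicator {\<gamma>} (snd z) \<le> dist (fst z) (snd z) ^ 2 + \<epsilon> * indicator U (fst z)"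
    proof (cases "snd z = \<gamma>")
      case True
      show ?thesis
      proof (cases "fst z \<in> U")
        case True with i1 \<open>snd z = \<gamma>\<close> show ?thesis by simp
      next
        case False with \<open>snd z = \<gamma>\<close> show ?thesis by (simp add: U_def)
      qed
    next
      case False with i1 eps show ?thesis by (simp add: indicator_def)
    qed
    then have "ennreal (infdist (fst z) S ^ 2 + \<epsilon> * indicator {\<gamma>} (snd z)) \<le> ennreal (dist (fst z) (snd z) ^ 2 + \<epsilon> * indicator U (fst z))"
      by (rule ennreal_leI)
    then show ?thesis using eps by (simp add: ennreal_ind ennreal_plus)
  qed
  have m1: "(\<lambda>z::'a\<times>'a. ennreal (infdist (fst z) S ^ 2)) \<in> borel_measurable \<pi>"
    using measurable_compose[OF fst_borel infd_meas] c(1) by (simp cong: measurable_cong_sets)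
  have mi: "(\<lambda>z::'a\<times>'a. indicator {\<gamma>} (snd z) :: ennreal) \<in> borel_measurable \<pi>"
    using measurable_compose[OF snd_borel borel_measurable_indicator[OF fin_borel[of "{\<gamma>}"]]] c(1)
    by (simp cong: measurable_cong_sets)
  have m2: "(\<lambda>z::'a\<times>'a. ennreal \<epsilon> * indicator {\<gamma>} (snd z)) \<in> borel_measurable \<pi>"
    by (rule borel_measurable_times_ennreal[OF borel_measurable_const mi])
  have m3: "(\<lambda>z::'a\<times>'a. ennreal ((dist (fst z) (snd z))^2)) \<in> borel_measurable \<pi>"
    using dist_sq_meas_enn c(1) by (simp cong: measurable_cong_sets)
  have mj: "(\<lambda>z::'a\<times>'a. indicator U (fst z) :: ennreal) \<in> borel_measurable \<pi>"
    using measurable_compose[OF fst_borel borel_measurable_indicator[OF U]] c(1)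
    by (simp cong: measurable_cong_sets)
  have m4: "(\<lambda>z::'a\<times>'a. ennreal \<epsilon> * indicator U (fst z)) \<in> borel_measurable \<pi>"
    by (rule borel_measurable_times_ennreal[OF borel_measurable_const mj])
  have "(\<integral>\<^sup>+z. ennreal (infdist (fst z) S ^ 2) + ennreal \<epsilon> * indicator {\<gamma>} (snd z) \<partial>\<pi>)
     \<le> (\<integral>\<^sup>+z. ennreal ((dist (fst z) (snd z))^2) + ennreal \<epsilon> * indicator U (fst z) \<partial>\<pi>)"
    by (rule nn_integral_mono_AE) (use aeS pw in auto)
  also have "\<dots> = (\<integral>\<^sup>+z. ennreal ((dist (fst z) (snd z))^2) \<partial>\<pi>) + (\<integral>\<^sup>+z. ennreal \<epsilon> * indicator U (fst z) \<partial>\<pi>)"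
    by (rule nn_integral_add[OF m3 m4])
  also have "(\<integral>\<^sup>+z. ennreal \<epsilon> * indicator U (fst z) \<partial>\<pi>) = (\<integral>\<^sup>+x. ennreal \<epsilon> * indicator U x \<partial>\<mu>)"
    by (rule cpl_marg_fst[OF pi, of "\<lambda>x. ennreal \<epsilon> * indicator U x"]) (use U in simp)
  also have "\<dots> = ennreal \<epsilon> * emeasure \<mu> U" using U sets_mu by (intro nn_integral_cmult_indicator) simp
  also have "(\<integral>\<^sup>+z. ennreal (infdist (fst z) S ^ 2) + ennreal \<epsilon> * indicator {\<gamma>} (snd z) \<partial>\<pi>)
     = (\<integral>\<^sup>+z. ennreal (infdist (fst z) S ^ 2) \<partial>\<pi>) + (\<integral>\<^sup>+z. ennreal \<epsilon> * indicator {\<gamma>} (snd z) \<partial>\<pi>)"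
    by (rule nn_integral_add[OF m1 m2])
  also have "(\<integral>\<^sup>+z. ennreal (infdist (fst z) S ^ 2) \<partial>\<pi>) = (\<integral>\<^sup>+x. ennreal (infdist x S ^ 2) \<partial>\<mu>)"
    by (rule cpl_marg_fst[OF pi]) (use infd_meas in simp)
  also have "\<dots> = ennreal (Dst S)" using distortion_eq[OF Sne] by (simp add: distortion_def)
  also have "(\<integral>\<^sup>+z. ennreal \<epsilon> * indicator {\<gamma>} (snd z) \<partial>\<pi>) = (\<integral>\<^sup>+x. ennreal \<epsilon> * indicator {\<gamma>} x \<partial>\<eta>)"
    by (rule cpl_marg_snd[OF pi, of "\<lambda>x. ennreal \<epsilon> * indicator {\<gamma>} x"]) simp
  also have "\<dots> = ennreal \<epsilon> * emeasure \<eta> {\<gamma>}" using eta(2) by (intro nn_integral_cmult_indicator) simp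
  finally have *: "ennreal (Dst S) + ennreal \<epsilon> * emeasure \<eta> {\<gamma>}
      \<le> (\<integral>\<^sup>+z. ennreal ((dist (fst z) (snd z))^2) \<partial>\<pi>) + ennreal \<epsilon> * emeasure \<mu> U" .
  show ?thesis
    using * eps Dst_nonneg[of S]
    by (simp add: emeasure_eq_measure E.emeasure_eq_measure ennreal_plus ennreal_mult)
qed


lemma W2_sq:
  assumes "prob_space \<eta>" "sets \<eta> = sets borel" "finite S" "emeasure \<eta> S = 1"
  shows "(INF \<pi>\<in>couplings \<mu> \<eta>. \<integral>\<^sup>+ z. ennreal ((dist (fst z) (snd z))^2) \<partial>\<pi>) < \<infinity>"
    "W2 \<mu> \<eta> ^ 2 = enn2real (INF \<pi>\<in>couplings \<mu> \<eta>. \<integral>\<^sup>+ z. ennreal ((dist (fst z) (snd z))^2) \<partial>\<pi>)"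
proof -
  show "(INF \<pi>\<in>couplings \<mu> \<eta>. \<integral>\<^sup>+ z. ennreal ((dist (fst z) (snd z))^2) \<partial>\<pi>) < \<infinity>"
    by (rule INF_cost_fin[OF prob_space_axioms assms(1) sets_mu assms(2) m2_mu_fin fin_supp_m2_fin[OF assms]])
  show "W2 \<mu> \<eta> ^ 2 = enn2real (INF \<pi>\<in>couplings \<mu> \<eta>. \<integral>\<^sup>+ z. ennreal ((dist (fst z) (snd z))^2) \<partial>\<pi>)"
    unfolding W2_def by simp
qed

lemma F1W:
  fixes \<gamma> :: 'a and \<epsilon> :: real
  assumes eta: "prob_space \<eta>" "sets \<eta> = sets borel" "finite S" "emeasure \<eta> S = 1"
    and eps: "\<epsilon> \<ge> 0"
  defines "U \<equiv> {x. dist x \<gamma> ^ 2 - \<epsilon> < infdist x S ^ 2}"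
  shows "Dst S + \<epsilon> * measure \<eta> {\<gamma>} \<le> W2 \<mu> \<eta> ^ 2 + \<epsilon> * measure \<mu> U"
proof -
  define I where "I = (INF \<pi>\<in>couplings \<mu> \<eta>. \<integral>\<^sup>+ z. ennreal ((dist (fst z) (snd z))^2) \<partial>\<pi>)"
  have fin: "I < \<infinity>" unfolding I_def by (rule W2_sq(1)[OF eta])
  have W: "W2 \<mu> \<eta> ^ 2 = enn2real I" unfolding I_def by (rule W2_sq(2)[OF eta])
  define a where "a = Dst S + \<epsilon> * measure \<eta> {\<gamma>}"
  define b where "b = \<epsilon> * measure \<mu> U"
  have b0: "b \<ge> 0" unfolding b_def using eps by simp
  have key: "ennreal (a - b) \<le> I"
    unfolding I_def
  proof (rule INF_greatest)
    fix \<pi> assume pi: "\<pi> \<in> couplings \<mu> \<eta>"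
    have h: "ennreal a \<le> (\<integral>\<^sup>+ z. ennreal ((dist (fst z) (snd z))^2) \<partial>\<pi>) + ennreal b"
      unfolding a_def b_def U_def by (rule F1gen[OF pi eta eps])
    show "ennreal (a - b) \<le> (\<integral>\<^sup>+ z. ennreal ((dist (fst z) (snd z))^2) \<partial>\<pi>)"
    proof (cases "(\<integral>\<^sup>+ z. ennreal ((dist (fst z) (snd z))^2) \<partial>\<pi>)" rule: ennreal_cases)
      case (real c)
      then have "ennreal a \<le> ennreal (c + b)" using h b0 by (simp add: ennreal_plus)
      moreover have cb: "0 \<le> c + b" using real b0 by simp
      ultimately have "a \<le> c + b" using ennreal_le_iff[OF cb] by blast
      then show ?thesis using real by (simp add: ennreal_leI)
    qed simp
  qed
  have "a - b \<le> enn2real I"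
  proof (cases "a - b \<ge> 0")
    case True
    then have "enn2real (ennreal (a - b)) \<le> enn2real I" using key fin by (intro enn2real_mono) auto
    then show ?thesis using True by simp
  next
    case False then show ?thesis by (simp add: enn2real_nonneg order_trans[OF _ enn2real_nonneg])
  qed
  then show ?thesis unfolding a_def b_def W by simp
qed

lemma W2_lower:
  assumes "prob_space \<eta>" "sets \<eta> = sets borel" "finite S" "emeasure \<eta> S = 1"
  shows "Dst S \<le> W2 \<mu> \<eta> ^ 2"
  using F1W[OF assms order_refl, of undefined] by simp

end


context qz begin

lemma F2gen:
  fixes \<gamma> :: 'a and \<epsilon> :: real
  assumes cvx: "cvx_le \<eta> \<mu>" and eta: "prob_space \<eta>" "sets \<eta> = sets borel" "finite S" "emeasure \<eta> S = 1"
    and g: "\<gamma> \<in> S" and eps: "\<epsilon> \<ge> 0"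
  defines "U \<equiv> {x. dist x \<gamma> ^ 2 - \<epsilon> < infdist x S ^ 2}"
  shows "(\<integral>x. norm x ^ 2 \<partial>\<eta>) + \<epsilon> * measure \<eta> {\<gamma>} \<le> (\<integral>x. norm x ^ 2 \<partial>\<mu>) - Dst S + \<epsilon> * measure \<mu> U"
proof -
  interpret E: prob_space \<eta> by fact
  have Sne: "S \<noteq> {}" using g by auto
  define c where "c s = (if s = \<gamma> then \<epsilon> else 0)" for s
  define \<phi> where "\<phi> x = Max ((\<lambda>s. inner (2 *\<^sub>R s) x + (c s - norm s ^ 2)) ` S)" for x
  have U: "U \<in> sets borel" unfolding U_def by (rule U_sets)
  have phi_ge: "inner (2 *\<^sub>R s) x + (c s - norm s ^ 2) \<le> \<phi> x" if "s \<in> S" for s x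
    unfolding \<phi>_def using that eta(3) by (intro Max_ge) auto
  have phi_le: "\<phi> x \<le> norm x ^ 2 - infdist x S ^ 2 + indicator U x * \<epsilon>" for x
    unfolding \<phi>_def
  proof (subst Max_le_iff, use eta(3) Sne in simp_all, intro ballI)
    fix s assume s: "s \<in> S"
    have id: "inner (2 *\<^sub>R s) x + (c s - norm s ^ 2) = norm x ^ 2 - dist x s ^ 2 + c s"
      using inner_dist_id[of s x] by simp
    have d: "infdist x S ^ 2 \<le> dist x s ^ 2" using power_mono[OF infdist_le[OF s] infdist_nonneg] .
    have "norm x ^ 2 - dist x s ^ 2 + c s \<le> norm x ^ 2 - infdist x S ^ 2 + indicator U x * \<epsilon>"
    proof (cases "s = \<gamma>")
      case True
      show ?thesis
      proof (cases "x \<in> U")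
        case True with d \<open>s = \<gamma>\<close> show ?thesis by (simp add: c_def)
      next
        case False with \<open>s = \<gamma>\<close> show ?thesis by (simp add: c_def U_def)
      qed
    next
      case False with d eps show ?thesis by (simp add: c_def indicator_def)
    qed
    then show "2 * inner s x + (c s - norm s ^ 2) \<le> norm x ^ 2 - infdist x S ^ 2 + indicator U x * \<epsilon>"
      using id by simp
  qed
  have phi_cvx: "convex_on UNIV \<phi>"
    unfolding \<phi>_def by (rule cvx_Max_affine[OF eta(3) Sne])
  have phi_meas: "\<phi> \<in> borel_measurable borel"
    using convex_measurable[of "\<lambda>x. x" borel UNIV \<phi>] phi_cvx by simp
  have phi_int: "integrable \<mu> \<phi>"
  proof (rule int_bound[where c="\<epsilon> + 2 * norm \<gamma> ^ 2" and d=2])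
    show "\<phi> \<in> borel_measurable borel" by fact
    fix x
    have l: "norm x ^ 2 - dist x \<gamma> ^ 2 + c \<gamma> \<le> \<phi> x"
      using phi_ge[OF g, of x] inner_dist_id[of \<gamma> x] by simp
    have ie: "indicator U x * \<epsilon> \<le> \<epsilon>" using eps by (simp add: indicator_def)
    have u: "\<phi> x \<le> norm x ^ 2 + \<epsilon>"
      using phi_le[of x] ie zero_le_power2[of "infdist x S"] by linarith
    have "dist x \<gamma> ^ 2 \<le> 2 * norm x ^ 2 + 2 * norm \<gamma> ^ 2" by (rule dist_sq_le)
    moreover have "c \<gamma> \<ge> 0" using eps by (simp add: c_def)
    ultimately show "norm (\<phi> x) \<le> \<epsilon> + 2 * norm \<gamma> ^ 2 + 2 * norm x ^ 2"
      using l u eps by (simp add: abs_le_iff) (smt (verit) zero_le_power2)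
  qed
  from cvx have cv: "integrable \<eta> \<phi> \<and> (\<integral>x. \<phi> x \<partial>\<eta>) \<le> (\<integral>x. \<phi> x \<partial>\<mu>)"
    unfolding cvx_le_def using phi_cvx phi_int by blast
  have nsm: "(\<lambda>x::'a. norm x ^ 2) \<in> borel_measurable borel" by measurable
  have m2e: "(\<integral>x. norm x ^ 2 \<partial>\<eta>) = (\<Sum>s\<in>S. norm s ^ 2 * measure \<eta> {s})"
    by (rule fin_supp_int(2)[OF eta nsm])
  have cs: "(\<Sum>s\<in>S. c s * measure \<eta> {s}) = \<epsilon> * measure \<eta> {\<gamma>}"
  proof -
    have "(\<Sum>s\<in>S. c s * measure \<eta> {s}) = (\<Sum>s\<in>S. if s = \<gamma> then \<epsilon> * measure \<eta> {\<gamma>} else 0)"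
      by (intro sum.cong) (auto simp: c_def)
    also have "\<dots> = \<epsilon> * measure \<eta> {\<gamma>}" using g eta(3) by simp
    finally show ?thesis .
  qed
  have "(\<integral>x. norm x ^ 2 \<partial>\<eta>) + \<epsilon> * measure \<eta> {\<gamma>} = (\<Sum>s\<in>S. (norm s ^ 2 + c s) * measure \<eta> {s})"
    using m2e cs by (simp add: distrib_right sum.distrib)
  also have "\<dots> \<le> (\<Sum>s\<in>S. \<phi> s * measure \<eta> {s})"
  proof (intro sum_mono mult_right_mono)
    fix s assume s: "s \<in> S"
    show "norm s ^ 2 + c s \<le> \<phi> s" using phi_ge[OF s, of s] inner_dist_id[of s s] by simp
  qed simp
  also have "\<dots> = (\<integral>x. \<phi> x \<partial>\<eta>)" by (rule fin_supp_int(2)[OF eta phi_meas, symmetric])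
  also have "\<dots> \<le> (\<integral>x. \<phi> x \<partial>\<mu>)" using cv by simp
  also have "\<dots> \<le> (\<integral>x. norm x ^ 2 - infdist x S ^ 2 + indicator U x * \<epsilon> \<partial>\<mu>)"
    by (intro integral_mono phi_int phi_le Bochner_Integration.integrable_add Bochner_Integration.integrable_diff
        int_sq int_infd[OF Sne] int_indc U)
  also have "\<dots> = (\<integral>x. norm x ^ 2 \<partial>\<mu>) - Dst S + \<epsilon> * measure \<mu> U"
  proof -
    have i3: "integrable \<mu> (\<lambda>x. indicator U x * \<epsilon>)" by (rule int_indc[OF U])
    have "(\<integral>x. norm x ^ 2 - infdist x S ^ 2 + indicator U x * \<epsilon> \<partial>\<mu>)
        = (\<integral>x. norm x ^ 2 - infdist x S ^ 2 \<partial>\<mu>) + (\<integral>x. indicator U x * \<epsilon> \<partial>\<mu>)"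
      by (rule Bochner_Integration.integral_add[OF Bochner_Integration.integrable_diff[OF int_sq int_infd[OF Sne]] i3])
    also have "(\<integral>x. norm x ^ 2 - infdist x S ^ 2 \<partial>\<mu>) = (\<integral>x. norm x ^ 2 \<partial>\<mu>) - Dst S"
      unfolding Dst_def by (rule Bochner_Integration.integral_diff[OF int_sq int_infd[OF Sne]])
    also have "(\<integral>x. indicator U x * \<epsilon> \<partial>\<mu>) = \<epsilon> * measure \<mu> U"
      using U sets_mu by simp
    finally show ?thesis .
  qed
  finally show ?thesis .
qed

lemma F2:
  assumes cvx: "cvx_le \<eta> \<mu>" and eta: "prob_space \<eta>" "sets \<eta> = sets borel" "finite S" "emeasure \<eta> S = 1"
  shows "(\<integral>x. norm x ^ 2 \<partial>\<eta>) \<le> (\<integral>x. norm x ^ 2 \<partial>\<mu>) - Dst S"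
proof -
  obtain g where "g \<in> S" using eta(4) by (cases "S = {}") auto
  from F2gen[OF assms this order_refl] show ?thesis by simp
qed

end


lemma fin_range_meas:
  fixes f :: "'a::euclidean_space \<Rightarrow> 'b::euclidean_space"
  assumes "finite R" "\<forall>x. f x \<in> R" "\<And>r. r \<in> R \<Longrightarrow> f -` {r} \<in> sets borel"
  shows "f \<in> borel_measurable borel"
proof (rule borel_measurableI)
  fix S :: "'b set" assume "open S"
  have "f -` S = (\<Union>r\<in>R \<inter> S. f -` {r})" using assms(2) by auto
  also have "\<dots> \<in> sets borel" using assms(1,3) by (intro sets.finite_UN) auto
  finally show "f -` S \<inter> space borel \<in> sets borel" by simp
qed

definition Acl :: "'a::euclidean_space set \<Rightarrow> 'a \<Rightarrow> 'a set" where
  "Acl \<Gamma> s = {x. dist x s = infdist x \<Gamma>}"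

lemma Acl_sets: "Acl \<Gamma> s \<in> sets borel"
proof -
  have "Acl \<Gamma> s = (\<lambda>x. dist x s - infdist x \<Gamma>) -` {0}" by (auto simp: Acl_def)
  also have "\<dots> \<in> sets borel"
    by (rule measurable_sets_borel[OF borel_measurable_continuous_onI]) (auto intro!: continuous_intros)
  finally show ?thesis .
qed

definition pl :: "'a::euclidean_space list \<Rightarrow> 'a \<Rightarrow> 'a" where
  "pl xs x = xs ! (LEAST i. i < length xs \<and> x \<in> Acl (set xs) (xs ! i))"

lemma pl_ex:
  fixes xs :: "'a::euclidean_space list"
  assumes "xs \<noteq> []"
  shows "\<exists>i. i < length xs \<and> x \<in> Acl (set xs) (xs ! i)"
proof -
  have "closed (set xs)" "set xs \<noteq> {}" using assms by (auto intro: finite_imp_closed)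
  from infdist_attains_inf[OF this, of x] obtain y where "y \<in> set xs" "infdist x (set xs) = dist x y" by blast
  then show ?thesis by (auto simp: Acl_def in_set_conv_nth)
qed

lemma pl_char:
  fixes xs :: "'a::euclidean_space list"
  assumes "xs \<noteq> []" "distinct xs" "i < length xs"
  shows "pl xs x = xs ! i \<longleftrightarrow> x \<in> Acl (set xs) (xs ! i) \<and> (\<forall>j<i. x \<notin> Acl (set xs) (xs ! j))"
proof -
  define P where "P i = (i < length xs \<and> x \<in> Acl (set xs) (xs ! i))" for i
  obtain k where Pk: "P k" using pl_ex[OF assms(1), of x] by (auto simp: P_def)
  have L: "P (LEAST i. P i)" using LeastI[of P k, OF Pk] .
  have pl: "pl xs x = xs ! (LEAST i. P i)" by (simp add: pl_def P_def)
  show ?thesis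
  proof
    assume "pl xs x = xs ! i"
    then have "(LEAST i. P i) = i" using L assms(2,3) pl by (simp add: P_def nth_eq_iff_index_eq)
    then show "x \<in> Acl (set xs) (xs ! i) \<and> (\<forall>j<i. x \<notin> Acl (set xs) (xs ! j))"
      using L not_less_Least[of _ P] assms(3) by (auto simp: P_def)
  next
    assume h: "x \<in> Acl (set xs) (xs ! i) \<and> (\<forall>j<i. x \<notin> Acl (set xs) (xs ! j))"
    have "(LEAST i. P i) = i"
      by (rule Least_equality) (use h assms(3) in \<open>auto simp: P_def not_less[symmetric]\<close>)
    then show "pl xs x = xs ! i" using pl by simp
  qed
qed

lemma pl_in:
  fixes xs :: "'a::euclidean_space list"
  assumes "xs \<noteq> []"
  shows "pl xs x \<in> set xs" "dist x (pl xs x) = infdist x (set xs)"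
proof -
  define P where "P i = (i < length xs \<and> x \<in> Acl (set xs) (xs ! i))" for i
  obtain k where Pk: "P k" using pl_ex[OF assms(1), of x] by (auto simp: P_def)
  have L: "P (LEAST i. P i)" using LeastI[of P k, OF Pk] .
  have pl: "pl xs x = xs ! (LEAST i. P i)" by (simp add: pl_def P_def)
  define j where "j = (LEAST i. P i)"
  have j: "j < length xs" "x \<in> Acl (set xs) (xs ! j)" using L unfolding j_def P_def by auto
  have pj: "pl xs x = xs ! j" using pl j_def by simp
  show "pl xs x \<in> set xs" "dist x (pl xs x) = infdist x (set xs)"
    using j unfolding pj by (auto simp: Acl_def)
qed

lemma pl_nn_proj:
  fixes xs :: "'a::euclidean_space list"
  assumes "xs \<noteq> []" "distinct xs"
  shows "nn_proj (set xs) (pl xs)"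
proof -
  have "pl xs \<in> borel_measurable borel"
  proof (rule fin_range_meas[of "set xs"])
    show "\<forall>x. pl xs x \<in> set xs" using pl_in[OF assms(1)] by blast
    fix r assume "r \<in> set xs"
    then obtain i where i: "i < length xs" "r = xs ! i" by (auto simp: in_set_conv_nth)
    have "pl xs -` {r} = Acl (set xs) (xs ! i) - (\<Union>j\<in>{..<i}. Acl (set xs) (xs ! j))"
      using pl_char[OF assms i(1)] i(2) by auto
    also have "\<dots> \<in> sets borel" using Acl_sets by auto
    finally show "pl xs -` {r} \<in> sets borel" .
  qed simp
  then show ?thesis using pl_in[OF assms(1)] by (simp add: nn_proj_def)
qed

lemma nn_proj_ex:
  fixes \<Gamma> :: "'a::euclidean_space set"
  assumes "finite \<Gamma>" "\<Gamma> \<noteq> {}"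
  shows "\<exists>p. nn_proj \<Gamma> p"
proof -
  obtain xs where "set xs = \<Gamma>" "distinct xs" using finite_distinct_list[OF assms(1)] by blast
  then show ?thesis using pl_nn_proj[of xs] assms(2) by auto
qed

lemma nn_proj_props:
  assumes "nn_proj \<Gamma> p"
  shows "p \<in> borel_measurable borel" "\<And>x. p x \<in> \<Gamma>" "\<And>x. dist x (p x) = infdist x \<Gamma>"
  using assms by (auto simp: nn_proj_def)


context qz begin

lemma null_cell_int:
  assumes "C \<in> sets borel" "measure \<mu> C = 0"
  shows "(\<integral>x. indicator C x *\<^sub>R (f x :: 'a) \<partial>\<mu>) = 0"
proof (rule integral_eq_zero_AE)
  have "C \<in> null_sets \<mu>" using assms sets_mu by (simp add: null_sets_def emeasure_eq_measure)
  from AE_not_in[OF this] show "AE x in \<mu>. indicator C x *\<^sub>R f x = 0" by eventually_elim simp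
qed

lemma lloyd:
  assumes p: "nn_proj \<Gamma> p" and G: "finite \<Gamma>" "\<Gamma> \<noteq> {}"
    and m_def: "m = (\<lambda>s. measure \<mu> (p -` {s}))"
    and v_def: "v = (\<lambda>s. (\<integral>x. indicator (p -` {s}) x *\<^sub>R x \<partial>\<mu>))"
    and c_def: "c = (\<lambda>s. if m s = 0 then s else (1 / m s) *\<^sub>R v s)"
  shows "balanced (\<lambda>x. c (p x)) (c ` \<Gamma>)"
    "Dst \<Gamma> = (\<integral>x. dist x (c (p x)) ^ 2 \<partial>\<mu>) + (\<Sum>s\<in>\<Gamma>. m s * dist (c s) s ^ 2)"
    "\<And>s. v s = m s *\<^sub>R c s"
proof -
  note pp = nn_proj_props[OF p]
  have C: "\<And>s. p -` {s} \<in> sets borel" by (rule cell_sets2[OF pp(1)])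
  have Cm: "\<And>s. p -` {s} \<in> sets \<mu>" using C sets_mu by simp
  have iv: "\<And>s. integrable \<mu> (\<lambda>x. indicator (p -` {s}) x *\<^sub>R x)"
    by (rule integrable_mult_indicator[OF Cm int_id])
  show vA: "\<And>s. v s = m s *\<^sub>R c s"
  proof -
    fix s
    show "v s = m s *\<^sub>R c s"
    proof (cases "m s = 0")
      case True
      then show ?thesis unfolding v_def using null_cell_int[OF C, of s "\<lambda>x. x"] m_def by simp
    next
      case False then show ?thesis by (simp add: c_def)
    qed
  qed
  have zero: "(\<integral>x. indicator (p -` {s}) x *\<^sub>R (x - c s) \<partial>\<mu>) = 0" for s
  proof -
    have ic: "integrable \<mu> (\<lambda>x. indicator (p -` {s}) x *\<^sub>R c s)"
      by (rule integrable_mult_indicator[OF Cm]) simp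
    have "(\<integral>x. indicator (p -` {s}) x *\<^sub>R (x - c s) \<partial>\<mu>)
        = (\<integral>x. indicator (p -` {s}) x *\<^sub>R x - indicator (p -` {s}) x *\<^sub>R c s \<partial>\<mu>)"
      by (simp add: scaleR_diff_right)
    also have "\<dots> = v s - (\<integral>x. indicator (p -` {s}) x *\<^sub>R c s \<partial>\<mu>)"
      unfolding v_def by (rule Bochner_Integration.integral_diff[OF iv ic])
    also have "(\<integral>x. indicator (p -` {s}) x *\<^sub>R c s \<partial>\<mu>) = (\<integral>x. indicator (p -` {s}) x \<partial>\<mu>) *\<^sub>R c s"
      by (rule integral_scaleR_left) (use int_indc[OF C, of s 1] in simp)
    also have "\<dots> = m s *\<^sub>R c s" by (simp add: m_def)
    finally show ?thesis using vA[of s] by simp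
  qed
  let ?q = "\<lambda>x. c (p x)"
  have qR: "\<forall>x. ?q x \<in> c ` \<Gamma>" using pp(2) by auto
  have qcell: "?q -` {t} = p -` (\<Gamma> \<inter> c -` {t})" for t using pp(2) by auto
  have qm: "?q \<in> borel_measurable borel"
  proof (rule fin_range_meas[OF _ qR])
    show "finite (c ` \<Gamma>)" using G by simp
    fix t
    show "?q -` {t} \<in> sets borel" unfolding qcell
      by (rule measurable_sets_borel[OF pp(1) fin_borel]) (use G in simp)
  qed
  show "balanced ?q (c ` \<Gamma>)"
    unfolding balanced_def
  proof (intro conjI qm qR ballI)
    show "finite (c ` \<Gamma>)" using G by simp
    fix t assume "t \<in> c ` \<Gamma>"
    have pw: "indicator (?q -` {t}) x *\<^sub>R (x - t) = (\<Sum>s\<in>\<Gamma> \<inter> c -` {t}. indicator (p -` {s}) x *\<^sub>R (x - c s))" for x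
    proof -
      have "(\<Sum>s\<in>\<Gamma> \<inter> c -` {t}. indicator (p -` {s}) x *\<^sub>R (x - c s))
          = (\<Sum>s\<in>\<Gamma> \<inter> c -` {t}. if p x = s then x - c (p x) else 0)"
        by (intro sum.cong) (auto simp: indicator_def)
      also have "\<dots> = (if p x \<in> \<Gamma> \<inter> c -` {t} then x - c (p x) else 0)"
        using G(1) by (simp add: sum.delta)
      also have "\<dots> = indicator (?q -` {t}) x *\<^sub>R (x - t)"
        using pp(2)[of x] by (auto simp: indicator_def)
      finally show ?thesis by simp
    qed
    have "(\<integral>x. indicator (?q -` {t}) x *\<^sub>R (x - t) \<partial>\<mu>)
        = (\<integral>x. (\<Sum>s\<in>\<Gamma> \<inter> c -` {t}. indicator (p -` {s}) x *\<^sub>R (x - c s)) \<partial>\<mu>)"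
      by (simp only: pw)
    also have "\<dots> = (\<Sum>s\<in>\<Gamma> \<inter> c -` {t}. (\<integral>x. indicator (p -` {s}) x *\<^sub>R (x - c s) \<partial>\<mu>))"
      by (rule Bochner_Integration.integral_sum) (rule integrable_mult_indicator[OF Cm int_shift])
    also have "\<dots> = 0" by (rule sum.neutral) (use zero in blast)
    finally show "(\<integral>x. indicator (?q -` {t}) x *\<^sub>R (x - t) \<partial>\<mu>) = 0" .
  qed
  have pt: "dist x (p x) ^ 2 = dist x (?q x) ^ 2 + inner (2 *\<^sub>R (c (p x) - p x)) (x - c (p x)) + dist (c (p x)) (p x) ^ 2" for x
  proof -
    define a where "a = x - c (p x)"
    define b where "b = c (p x) - p x"
    have "x - p x = a + b" by (simp add: a_def b_def)
    then have "dist x (p x) ^ 2 = inner (a + b) (a + b)" by (simp add: dist_norm power2_norm_eq_inner)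
    also have "\<dots> = inner a a + 2 * inner b a + inner b b"
      by (simp add: inner_add_left inner_add_right inner_commute[of a b])
    finally show ?thesis by (simp add: a_def b_def dist_norm power2_norm_eq_inner dist_commute)
  qed
  have i1: "integrable \<mu> (\<lambda>x. dist x (?q x) ^ 2)" by (rule int_dist_q[OF qm _ qR]) (use G in simp)
  have eqf: "\<And>s x. indicator (p -` {s}) x * inner (2 *\<^sub>R (c s - s)) (x - c s)
      = inner (2 *\<^sub>R (c s - s)) (indicator (p -` {s}) x *\<^sub>R (x - c s))"
    by (simp add: inner_scaleR_right)
  have i2s: "\<And>s. integrable \<mu> (\<lambda>x. indicator (p -` {s}) x * inner (2 *\<^sub>R (c s - s)) (x - c s))"
    unfolding eqf by (rule integrable_inner_right) (rule integrable_mult_indicator[OF Cm int_shift])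
  note d2 = dec[where h="\<lambda>s x. inner (2 *\<^sub>R (c s - s)) (x - c s)", OF G(1) pp(2)[THEN allI] i2s]
  have i3s: "\<And>s. integrable \<mu> (\<lambda>x. indicator (p -` {s}) x * dist (c s) s ^ 2)"
    by (rule int_indc[OF C])
  note d3 = dec[where h="\<lambda>s x. dist (c s) s ^ 2", OF G(1) pp(2)[THEN allI] i3s]
  have I2: "(\<integral>x. inner (2 *\<^sub>R (c (p x) - p x)) (x - c (p x)) \<partial>\<mu>) = 0"
  proof -
    have "(\<integral>x. inner (2 *\<^sub>R (c (p x) - p x)) (x - c (p x)) \<partial>\<mu>)
       = (\<Sum>s\<in>\<Gamma>. \<integral>x. indicator (p -` {s}) x * inner (2 *\<^sub>R (c s - s)) (x - c s) \<partial>\<mu>)"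
      using d2(2) by simp
    also have "\<dots> = (\<Sum>s\<in>\<Gamma>. inner (2 *\<^sub>R (c s - s)) (\<integral>x. indicator (p -` {s}) x *\<^sub>R (x - c s) \<partial>\<mu>))"
      unfolding eqf by (intro sum.cong refl integral_inner_right integrable_mult_indicator[OF Cm int_shift])
    also have "\<dots> = 0" using zero by simp
    finally show ?thesis .
  qed
  have I3: "(\<integral>x. dist (c (p x)) (p x) ^ 2 \<partial>\<mu>) = (\<Sum>s\<in>\<Gamma>. m s * dist (c s) s ^ 2)"
  proof -
    have "(\<integral>x. dist (c (p x)) (p x) ^ 2 \<partial>\<mu>) = (\<Sum>s\<in>\<Gamma>. \<integral>x. indicator (p -` {s}) x * dist (c s) s ^ 2 \<partial>\<mu>)"
      using d3(2) by simp
    also have "\<dots> = (\<Sum>s\<in>\<Gamma>. m s * dist (c s) s ^ 2)"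
      using Cm by (intro sum.cong refl) (simp add: m_def)
    finally show ?thesis .
  qed
  have "Dst \<Gamma> = (\<integral>x. dist x (p x) ^ 2 \<partial>\<mu>)" unfolding Dst_def using pp(3) by simp
  also have "\<dots> = (\<integral>x. dist x (?q x) ^ 2 + inner (2 *\<^sub>R (c (p x) - p x)) (x - c (p x)) + dist (c (p x)) (p x) ^ 2 \<partial>\<mu>)"
    by (rule Bochner_Integration.integral_cong[OF refl]) (rule pt)
  also have "\<dots> = (\<integral>x. dist x (?q x) ^ 2 + inner (2 *\<^sub>R (c (p x) - p x)) (x - c (p x)) \<partial>\<mu>) + (\<integral>x. dist (c (p x)) (p x) ^ 2 \<partial>\<mu>)"
    by (rule Bochner_Integration.integral_add[OF Bochner_Integration.integrable_add[OF i1 d2(1)] d3(1)])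
  also have "(\<integral>x. dist x (?q x) ^ 2 + inner (2 *\<^sub>R (c (p x) - p x)) (x - c (p x)) \<partial>\<mu>)
      = (\<integral>x. dist x (?q x) ^ 2 \<partial>\<mu>) + (\<integral>x. inner (2 *\<^sub>R (c (p x) - p x)) (x - c (p x)) \<partial>\<mu>)"
    by (rule Bochner_Integration.integral_add[OF i1 d2(1)])
  finally show "Dst \<Gamma> = (\<integral>x. dist x (c (p x)) ^ 2 \<partial>\<mu>) + (\<Sum>s\<in>\<Gamma>. m s * dist (c s) s ^ 2)"
    using I2 I3 by simp
qed

end


context qz begin

lemma cell_int_diff:
  assumes "C \<in> sets borel"
  shows "(\<integral>x. indicator C x *\<^sub>R (x - a) \<partial>\<mu>) = (\<integral>x. indicator C x *\<^sub>R x \<partial>\<mu>) - measure \<mu> C *\<^sub>R a"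
proof -
  have Cm: "C \<in> sets \<mu>" using assms sets_mu by simp
  have iv: "integrable \<mu> (\<lambda>x. indicator C x *\<^sub>R x)" by (rule integrable_mult_indicator[OF Cm int_id])
  have ic: "integrable \<mu> (\<lambda>x. indicator C x *\<^sub>R a)" by (rule integrable_mult_indicator[OF Cm]) simp
  have "(\<integral>x. indicator C x *\<^sub>R (x - a) \<partial>\<mu>) = (\<integral>x. indicator C x *\<^sub>R x - indicator C x *\<^sub>R a \<partial>\<mu>)"
    by (simp add: scaleR_diff_right)
  also have "\<dots> = (\<integral>x. indicator C x *\<^sub>R x \<partial>\<mu>) - (\<integral>x. indicator C x *\<^sub>R a \<partial>\<mu>)"
    by (rule Bochner_Integration.integral_diff[OF iv ic])
  also have "(\<integral>x. indicator C x *\<^sub>R a \<partial>\<mu>) = (\<integral>x. indicator C x \<partial>\<mu>) *\<^sub>R a"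
    by (rule integral_scaleR_left) (use int_indc[OF assms, of 1] in simp)
  finally show ?thesis by simp
qed

lemma F4:
  assumes "finite \<Gamma>'" "\<Gamma>' \<noteq> {}"
  shows "\<exists>q R. balanced q R \<and> card R \<le> card \<Gamma>' \<and> (\<integral>x. dist x (q x) ^ 2 \<partial>\<mu>) \<le> Dst \<Gamma>'"
proof -
  obtain p where p: "nn_proj \<Gamma>' p" using nn_proj_ex[OF assms] by blast
  define m where "m = (\<lambda>s. measure \<mu> (p -` {s}))"
  define v where "v = (\<lambda>s. (\<integral>x. indicator (p -` {s}) x *\<^sub>R x \<partial>\<mu>))"
  define c where "c = (\<lambda>s. if m s = 0 then s else (1 / m s) *\<^sub>R v s)"
  note L = lloyd[OF p assms m_def v_def c_def]
  have "(\<Sum>s\<in>\<Gamma>'. m s * dist (c s) s ^ 2) \<ge> 0" by (intro sum_nonneg) (simp add: m_def)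
  then have "(\<integral>x. dist x (c (p x)) ^ 2 \<partial>\<mu>) \<le> Dst \<Gamma>'" using L(2) by simp
  moreover have "card (c ` \<Gamma>') \<le> card \<Gamma>'" by (rule card_image_le[OF assms(1)])
  ultimately show ?thesis using L(1) by blast
qed

lemma Dst_le_of_opt:
  assumes "opt_quantizer \<mu> N \<Gamma>" "finite \<Gamma>'" "\<Gamma>' \<noteq> {}" "card \<Gamma>' \<le> N"
  shows "Dst \<Gamma> \<le> Dst \<Gamma>'"
proof -
  have "distortion \<mu> \<Gamma> \<le> distortion \<mu> \<Gamma>'" using assms by (auto simp: opt_quantizer_def)
  moreover have "\<Gamma> \<noteq> {}" using assms(1) by (simp add: opt_quantizer_def)
  ultimately show ?thesis using assms(3) Dst_nonneg[of \<Gamma>'] by (simp add: distortion_eq ennreal_le_iff)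
qed

lemma F5:
  assumes opt: "opt_quantizer \<mu> N \<Gamma>" and p: "nn_proj \<Gamma> p"
  shows "balanced p \<Gamma>"
proof -
  have G: "finite \<Gamma>" "\<Gamma> \<noteq> {}" "card \<Gamma> \<le> N" using opt by (auto simp: opt_quantizer_def)
  note pp = nn_proj_props[OF p]
  define m where "m = (\<lambda>s. measure \<mu> (p -` {s}))"
  define v where "v = (\<lambda>s. (\<integral>x. indicator (p -` {s}) x *\<^sub>R x \<partial>\<mu>))"
  define c where "c = (\<lambda>s. if m s = 0 then s else (1 / m s) *\<^sub>R v s)"
  note L = lloyd[OF p G(1,2) m_def v_def c_def]
  let ?q = "\<lambda>x. c (p x)"
  have qb: "?q \<in> borel_measurable borel" "finite (c ` \<Gamma>)" "\<forall>x. ?q x \<in> c ` \<Gamma>"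
    using L(1) by (auto simp: balanced_def)
  have R: "finite (c ` \<Gamma>)" "c ` \<Gamma> \<noteq> {}" "card (c ` \<Gamma>) \<le> N"
    using G card_image_le[OF G(1), of c] by auto
  have "Dst (c ` \<Gamma>) \<le> (\<integral>x. dist x (?q x) ^ 2 \<partial>\<mu>)"
    unfolding Dst_def
  proof (rule integral_mono[OF int_infd[OF R(2)] int_dist_q[OF qb]])
    fix x
    have "?q x \<in> c ` \<Gamma>" using qb(3) by blast
    from power_mono[OF infdist_le[OF this] infdist_nonneg]
    show "infdist x (c ` \<Gamma>) ^ 2 \<le> dist x (?q x) ^ 2" .
  qed
  moreover have "Dst \<Gamma> \<le> Dst (c ` \<Gamma>)" by (rule Dst_le_of_opt[OF opt R])
  ultimately have "(\<Sum>s\<in>\<Gamma>. m s * dist (c s) s ^ 2) \<le> 0" using L(2) by simp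
  moreover have nn: "\<forall>s\<in>\<Gamma>. m s * dist (c s) s ^ 2 \<ge> 0" by (simp add: m_def)
  ultimately have "\<forall>s\<in>\<Gamma>. m s * dist (c s) s ^ 2 = 0"
    using sum_nonneg_eq_0_iff[OF G(1)] nn by (metis (no_types, lifting) antisym sum_nonneg)
  then have ms: "\<forall>s\<in>\<Gamma>. m s = 0 \<or> c s = s" by simp
  show ?thesis
    unfolding balanced_def
  proof (intro conjI pp(1) G(1) allI pp(2) ballI)
    fix s assume s: "s \<in> \<Gamma>"
    have "(\<integral>x. indicator (p -` {s}) x *\<^sub>R (x - s) \<partial>\<mu>) = v s - m s *\<^sub>R s"
      unfolding v_def m_def by (rule cell_int_diff[OF cell_sets2[OF pp(1)]])
    also have "\<dots> = 0"
      using ms s L(3)[of s] by auto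
    finally show "(\<integral>x. indicator (p -` {s}) x *\<^sub>R (x - s) \<partial>\<mu>) = 0" .
  qed
qed

lemma bnd_null:
  assumes opt: "opt_quantizer \<mu> N \<Gamma>" and g: "\<gamma> \<in> \<Gamma>" "\<gamma>' \<in> \<Gamma>" "\<gamma> \<noteq> \<gamma>'"
  shows "measure \<mu> (Acl \<Gamma> \<gamma> \<inter> Acl \<Gamma> \<gamma>') = 0"
proof -
  have G: "finite \<Gamma>" using opt by (simp add: opt_quantizer_def)
  obtain rest where rest: "set rest = \<Gamma> - {\<gamma>, \<gamma>'}" "distinct rest"
    using finite_distinct_list[of "\<Gamma> - {\<gamma>, \<gamma>'}"] G by auto
  define xs1 where "xs1 = \<gamma> # \<gamma>' # rest"
  define xs2 where "xs2 = \<gamma>' # \<gamma> # rest"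
  have d: "distinct xs1" "distinct xs2" "xs1 \<noteq> []" "xs2 \<noteq> []" "set xs1 = \<Gamma>" "set xs2 = \<Gamma>"
    using rest g by (auto simp: xs1_def xs2_def)
  have p1: "nn_proj \<Gamma> (pl xs1)" using pl_nn_proj[OF d(3,1)] d(5) by simp
  have p2: "nn_proj \<Gamma> (pl xs2)" using pl_nn_proj[OF d(4,2)] d(6) by simp
  have c1: "pl xs1 -` {\<gamma>'} = Acl \<Gamma> \<gamma>' - Acl \<Gamma> \<gamma>"
  proof -
    have "pl xs1 x = xs1 ! 1 \<longleftrightarrow> x \<in> Acl (set xs1) (xs1 ! 1) \<and> (\<forall>j<1. x \<notin> Acl (set xs1) (xs1 ! j))" for x
      by (rule pl_char[OF d(3,1)]) (simp add: xs1_def)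
    then show ?thesis using d(5) by (auto simp: xs1_def)
  qed
  have c2: "pl xs2 -` {\<gamma>'} = Acl \<Gamma> \<gamma>'"
  proof -
    have "pl xs2 x = xs2 ! 0 \<longleftrightarrow> x \<in> Acl (set xs2) (xs2 ! 0) \<and> (\<forall>j<0. x \<notin> Acl (set xs2) (xs2 ! j))" for x
      by (rule pl_char[OF d(4,2)]) (simp add: xs2_def)
    then show ?thesis using d(6) by (auto simp: xs2_def)
  qed
  have "(\<integral>x. indicator (pl xs1 -` {\<gamma>'}) x *\<^sub>R (x - \<gamma>') \<partial>\<mu>) = 0"
    using F5[OF opt p1] g(2) by (simp add: balanced_def)
  then have b1: "(\<integral>x. indicator (Acl \<Gamma> \<gamma>' - Acl \<Gamma> \<gamma>) x *\<^sub>R (x - \<gamma>') \<partial>\<mu>) = 0"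
    by (simp only: c1)
  have "(\<integral>x. indicator (pl xs2 -` {\<gamma>'}) x *\<^sub>R (x - \<gamma>') \<partial>\<mu>) = 0"
    using F5[OF opt p2] g(2) by (simp add: balanced_def)
  then have b2: "(\<integral>x. indicator (Acl \<Gamma> \<gamma>') x *\<^sub>R (x - \<gamma>') \<partial>\<mu>) = 0"
    by (simp only: c2)
  define B where "B = Acl \<Gamma> \<gamma> \<inter> Acl \<Gamma> \<gamma>'"
  have Bs: "B \<in> sets \<mu>" unfolding B_def sets_mu by (intro sets.Int Acl_sets)
  have As: "Acl \<Gamma> \<gamma>' - Acl \<Gamma> \<gamma> \<in> sets \<mu>" unfolding sets_mu by (intro sets.Diff Acl_sets)
  have ind: "indicator (Acl \<Gamma> \<gamma>') x = indicator (Acl \<Gamma> \<gamma>' - Acl \<Gamma> \<gamma>) x + (indicator B x :: real)" for x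
    by (auto simp: indicator_def B_def)
  have "(\<integral>x. indicator (Acl \<Gamma> \<gamma>') x *\<^sub>R (x - \<gamma>') \<partial>\<mu>)
      = (\<integral>x. indicator (Acl \<Gamma> \<gamma>' - Acl \<Gamma> \<gamma>) x *\<^sub>R (x - \<gamma>') + indicator B x *\<^sub>R (x - \<gamma>') \<partial>\<mu>)"
    by (simp add: ind scaleR_add_left)
  also have "\<dots> = (\<integral>x. indicator (Acl \<Gamma> \<gamma>' - Acl \<Gamma> \<gamma>) x *\<^sub>R (x - \<gamma>') \<partial>\<mu>) + (\<integral>x. indicator B x *\<^sub>R (x - \<gamma>') \<partial>\<mu>)"
    by (rule Bochner_Integration.integral_add[OF integrable_mult_indicator[OF As int_shift] integrable_mult_indicator[OF Bs int_shift]])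
  finally have bB: "(\<integral>x. indicator B x *\<^sub>R (x - \<gamma>') \<partial>\<mu>) = 0" using b1 b2 by simp
  define w where "w = \<gamma>' - \<gamma>"
  have w0: "w \<noteq> 0" using g(3) by (simp add: w_def)
  have pw: "indicator B x * inner w (x - \<gamma>') = indicator B x * (- (norm w ^ 2 / 2))" for x
  proof (cases "x \<in> B")
    case True
    then have "dist x \<gamma> = dist x \<gamma>'" by (simp add: B_def Acl_def)
    then have e: "inner (x - \<gamma>) (x - \<gamma>) = inner (x - \<gamma>') (x - \<gamma>')"
      by (metis dist_norm power2_norm_eq_inner)
    have xe: "x - \<gamma> = (x - \<gamma>') + w" by (simp add: w_def)
    have gen: "inner (a + b) (a + b) = inner a a + 2 * inner b a + inner b b" for a b :: 'a
      by (simp add: inner_add_left inner_add_right inner_commute[of a b])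
    have "inner (x - \<gamma>) (x - \<gamma>) = inner (x - \<gamma>') (x - \<gamma>') + 2 * inner w (x - \<gamma>') + inner w w"
      unfolding xe by (rule gen)
    with e have "inner w (x - \<gamma>') = - (inner w w / 2)" by simp
    then show ?thesis using True by (simp add: power2_norm_eq_inner)
  qed simp
  have "(\<integral>x. indicator B x * inner w (x - \<gamma>') \<partial>\<mu>) = inner w (\<integral>x. indicator B x *\<^sub>R (x - \<gamma>') \<partial>\<mu>)"
    by (subst integral_inner_right[symmetric]) (auto intro: integrable_mult_indicator[OF Bs int_shift] simp: inner_scaleR_right)
  also have "\<dots> = 0" using bB by simp
  finally have "(\<integral>x. indicator B x * (- (norm w ^ 2 / 2)) \<partial>\<mu>) = 0" by (simp only: pw)
  then have "measure \<mu> B * (norm w ^ 2 / 2) = 0" using Bs by simp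
  then show ?thesis using w0 by (simp add: B_def)
qed

end


context qz begin

definition Kq :: "('a \<Rightarrow> 'a) \<Rightarrow> 'a \<Rightarrow> 'a measure" where
  "Kq q s = (if measure \<mu> (q -` {s}) \<noteq> 0
     then density \<mu> (\<lambda>y. ennreal (indicator (q -` {s}) y / measure \<mu> (q -` {s})))
     else return borel s)"

lemma K_sets: "sets (Kq q s) = sets borel"
  by (simp add: Kq_def sets_mu)

lemma K_space: "space (Kq q s) = UNIV"
  using sets_eq_imp_space_eq[OF K_sets] by simp

lemma K_emeasure:
  assumes q: "q \<in> borel_measurable borel" and m: "measure \<mu> (q -` {s}) \<noteq> 0" and B: "B \<in> sets borel"
  shows "emeasure (Kq q s) B = ennreal (1 / measure \<mu> (q -` {s})) * emeasure \<mu> (q -` {s} \<inter> B)"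
proof -
  let ?m = "measure \<mu> (q -` {s})"
  have C: "q -` {s} \<in> sets \<mu>" using cell_sets2[OF q] sets_mu by simp
  have fm: "(\<lambda>y. ennreal (indicator (q -` {s}) y / ?m)) \<in> borel_measurable \<mu>"
    using C by measurable
  have "emeasure (Kq q s) B = (\<integral>\<^sup>+ y. ennreal (indicator (q -` {s}) y / ?m) * indicator B y \<partial>\<mu>)"
    unfolding Kq_def using m B sets_mu fm by (simp add: emeasure_density)
  also have "\<dots> = (\<integral>\<^sup>+ y. ennreal (1 / ?m) * indicator (q -` {s} \<inter> B) y \<partial>\<mu>)"
    by (intro nn_integral_cong) (simp split: split_indicator)
  also have "\<dots> = ennreal (1 / ?m) * emeasure \<mu> (q -` {s} \<inter> B)"
    using C B sets_mu by (intro nn_integral_cmult_indicator) auto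
  finally show ?thesis .
qed

lemma K_prob:
  assumes q: "q \<in> borel_measurable borel"
  shows "prob_space (Kq q s)"
proof (cases "measure \<mu> (q -` {s}) \<noteq> 0")
  case True
  let ?m = "measure \<mu> (q -` {s})"
  have m0: "?m > 0" using True measure_nonneg[of \<mu> "q -` {s}"] by linarith
  have "emeasure (Kq q s) (space (Kq q s)) = ennreal (1 / ?m) * emeasure \<mu> (q -` {s} \<inter> UNIV)"
    unfolding K_space by (rule K_emeasure[OF q True]) simp
  also have "\<dots> = ennreal (1 / ?m) * ennreal ?m" by (simp add: emeasure_eq_measure)
  also have "\<dots> = 1" using m0 by (simp flip: ennreal_mult)
  finally show ?thesis by (rule prob_spaceI)
next
  case False then show ?thesis by (simp add: Kq_def prob_space_return)
qed

lemma K_meas: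
  assumes b: "balanced q R"
  shows "Kq q \<in> borel \<rightarrow>\<^sub>M prob_algebra borel"
proof (rule measurableI)
  have q: "q \<in> borel_measurable borel" "finite R" "\<forall>x. q x \<in> R" using b by (auto simp: balanced_def)
  fix x :: 'a
  show "Kq q x \<in> space (prob_algebra borel)" using K_prob[OF q(1)] K_sets by (simp add: space_prob_algebra)
next
  have q: "q \<in> borel_measurable borel" "finite R" "\<forall>x. q x \<in> R" using b by (auto simp: balanced_def)
  define F where "F = {s. measure \<mu> (q -` {s}) \<noteq> 0}"
  have FR: "F \<subseteq> R"
  proof
    fix s assume "s \<in> F"
    then have "q -` {s} \<noteq> {}" by (auto simp: F_def)
    then show "s \<in> R" using q(3) by auto
  qed
  then have Ff: "finite F" using q(2) finite_subset by blast
  fix A assume A: "A \<in> sets (prob_algebra (borel :: 'a measure))"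
  have "Kq q -` A \<inter> space borel = (F \<inter> Kq q -` A) \<union> (return borel -` A - F)"
    by (auto simp: Kq_def F_def)
  also have "\<dots> \<in> sets borel"
  proof (intro sets.Un sets.Diff)
    show "F \<inter> Kq q -` A \<in> sets borel" using Ff by (intro fin_borel) auto
    show "F \<in> sets borel" using Ff by (rule fin_borel)
    have "return borel -` A \<inter> space borel \<in> sets borel"
      by (rule measurable_sets[OF measurable_return_prob_space A])
    then show "return borel -` A \<in> sets borel" by simp
  qed
  finally show "Kq q -` A \<inter> space borel \<in> sets borel" .
qed


lemma mart_cpl:
  assumes b: "balanced q R"
  defines "\<nu> \<equiv> distr \<mu> borel q"
  defines "\<pi> \<equiv> \<nu> \<bind> (\<lambda>x. distr (Kq q x) borel (\<lambda>y. (x, y)))"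
  shows "\<pi> \<in> couplings \<nu> \<mu>"
proof -
  have q: "q \<in> borel_measurable borel" "finite R" "\<forall>x. q x \<in> R" using b by (auto simp: balanced_def)
  note bb = bal_basic[OF b, folded \<nu>_def]
  interpret V: prob_space \<nu> by (rule bb(1))
  have sv: "space \<nu> = UNIV" using sets_eq_imp_space_eq[OF bb(2)] by simp
  have Km: "Kq q \<in> \<nu> \<rightarrow>\<^sub>M prob_algebra borel"
    using K_meas[OF b] bb(2) by (simp cong: measurable_cong_sets)
  have sb: "sets (\<nu> \<Otimes>\<^sub>M (borel::'a measure)) = sets (borel :: ('a \<times> 'a) measure)"
    using sets_pair_measure_cong[OF bb(2) refl, of borel] borel_prod by metis
  have Pm: "(\<lambda>(x, y). (x, y)) \<in> \<nu> \<Otimes>\<^sub>M (borel::'a measure) \<rightarrow>\<^sub>M (borel :: ('a \<times> 'a) measure)"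
    using measurable_ident_sets[OF sb] by (simp add: case_prod_beta')
  have Nm: "(\<lambda>x. distr (Kq q x) borel (\<lambda>y. (x, y))) \<in> \<nu> \<rightarrow>\<^sub>M prob_algebra borel"
    by (rule measurable_distr_prob_space2[OF Km Pm])
  have Nm': "(\<lambda>x. distr (Kq q x) borel (\<lambda>y. (x, y))) \<in> borel \<rightarrow>\<^sub>M prob_algebra borel"
    using Nm bb(2) by (simp cong: measurable_cong_sets)
  have vsp: "\<nu> \<in> space (prob_algebra borel)" using bb(1,2) by (simp add: space_prob_algebra)
  have sp: "sets \<pi> = sets borel" unfolding \<pi>_def by (subst sets_bind) (auto simp: sv)
  have pairm: "(\<lambda>y. (x, y)) \<in> Kq q x \<rightarrow>\<^sub>M borel" for x
  proof -
    have "(\<lambda>y. (x, y)) \<in> (borel::'a measure) \<rightarrow>\<^sub>M borel"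
      by (intro borel_measurable_continuous_onI continuous_intros)
    then show ?thesis using K_sets by (simp cong: measurable_cong_sets)
  qed
  have emp: "emeasure \<pi> X = (\<integral>\<^sup>+x. emeasure (Kq q x) ((\<lambda>y. (x, y)) -` X) \<partial>\<nu>)" if X: "X \<in> sets borel" for X
  proof -
    have "emeasure \<pi> X = (\<integral>\<^sup>+x. emeasure (distr (Kq q x) borel (\<lambda>y. (x, y))) X \<partial>\<nu>)"
      unfolding \<pi>_def by (rule emeasure_bind_prob_algebra[OF vsp Nm' X])
    also have "\<dots> = (\<integral>\<^sup>+x. emeasure (Kq q x) ((\<lambda>y. (x, y)) -` X) \<partial>\<nu>)"
      by (intro nn_integral_cong) (simp add: emeasure_distr[OF pairm X] K_space)
    finally show ?thesis .
  qed
  have fstm: "fst \<in> \<pi> \<rightarrow>\<^sub>M borel" using fst_borel sp by (simp cong: measurable_cong_sets)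
  have sndm: "snd \<in> \<pi> \<rightarrow>\<^sub>M borel" using snd_borel sp by (simp cong: measurable_cong_sets)
  have spi: "space \<pi> = UNIV" using sets_eq_imp_space_eq[OF sp] by simp
  have d1: "distr \<pi> borel fst = \<nu>"
  proof (rule measure_eqI)
    show "sets (distr \<pi> borel fst) = sets \<nu>" using bb(2) by simp
    fix A assume "A \<in> sets (distr \<pi> borel fst)"
    then have A: "A \<in> sets borel" by simp
    have "emeasure (distr \<pi> borel fst) A = emeasure \<pi> (fst -` A \<inter> space \<pi>)" by (rule emeasure_distr[OF fstm A])
    also have "\<dots> = (\<integral>\<^sup>+x. emeasure (Kq q x) ((\<lambda>y. (x, y)) -` (fst -` A)) \<partial>\<nu>)"
      using emp[OF measurable_sets_borel[OF fst_borel A]] by (simp add: spi)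
    also have "\<dots> = (\<integral>\<^sup>+x. indicator A x \<partial>\<nu>)"
    proof (intro nn_integral_cong)
      fix x
      interpret Kx: prob_space "Kq q x" by (rule K_prob[OF q(1)])
      show "emeasure (Kq q x) ((\<lambda>y. (x, y)) -` (fst -` A)) = indicator A x"
      proof -
        have e: "(\<lambda>y. (x, y)) -` (fst -` A) = (if x \<in> A then UNIV else {})" by auto
        show ?thesis unfolding e using Kx.emeasure_space_1[unfolded K_space] by (auto simp: indicator_def)
      qed
    qed
    also have "\<dots> = emeasure \<nu> A" using A bb(2) by simp
    finally show "emeasure (distr \<pi> borel fst) A = emeasure \<nu> A" .
  qed
  have d2: "distr \<pi> borel snd = \<mu>"
  proof (rule measure_eqI)
    show "sets (distr \<pi> borel snd) = sets \<mu>" using sets_mu by simp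
    fix B assume "B \<in> sets (distr \<pi> borel snd)"
    then have B: "B \<in> sets borel" by simp
    have "emeasure (distr \<pi> borel snd) B = emeasure \<pi> (snd -` B \<inter> space \<pi>)" by (rule emeasure_distr[OF sndm B])
    also have "\<dots> = (\<integral>\<^sup>+x. emeasure (Kq q x) B \<partial>\<nu>)"
      using emp[OF measurable_sets_borel[OF snd_borel B]] by (simp add: spi vimage_def)
    also have "\<dots> = (\<Sum>s\<in>R. emeasure (Kq q s) B * emeasure \<nu> {s})"
      by (rule fin_supp_nn[OF bb(1,2,4,3)])
    also have "\<dots> = (\<Sum>s\<in>R. emeasure \<mu> (B \<inter> q -` {s}))"
    proof (intro sum.cong refl)
      fix s assume "s \<in> R"
      have nu_s: "emeasure \<nu> {s} = emeasure \<mu> (q -` {s})"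
        unfolding \<nu>_def using bb(5) by (subst emeasure_distr) (auto simp: fin_borel)
      show "emeasure (Kq q s) B * emeasure \<nu> {s} = emeasure \<mu> (B \<inter> q -` {s})"
      proof (cases "measure \<mu> (q -` {s}) = 0")
        case True
        then have z: "emeasure \<mu> (q -` {s}) = 0" by (simp add: emeasure_eq_measure)
        have "emeasure \<mu> (B \<inter> q -` {s}) \<le> emeasure \<mu> (q -` {s})"
          using B cell_sets2[OF q(1)] sets_mu by (intro emeasure_mono) auto
        then show ?thesis using z nu_s by simp
      next
        case False
        have m0: "measure \<mu> (q -` {s}) > 0" using False measure_nonneg[of \<mu> "q -` {s}"] by linarith
        have "emeasure (Kq q s) B * emeasure \<nu> {s}
            = ennreal (1 / measure \<mu> (q -` {s})) * emeasure \<mu> (q -` {s} \<inter> B) * ennreal (measure \<mu> (q -` {s}))"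
          using K_emeasure[OF q(1) False B] nu_s by (simp add: emeasure_eq_measure)
        also have "\<dots> = emeasure \<mu> (q -` {s} \<inter> B) * (ennreal (1 / measure \<mu> (q -` {s})) * ennreal (measure \<mu> (q -` {s})))"
          by (simp add: ac_simps)
        also have "ennreal (1 / measure \<mu> (q -` {s})) * ennreal (measure \<mu> (q -` {s})) = 1"
          using m0 by (simp flip: ennreal_mult)
        finally show ?thesis by (simp add: Int_commute)
      qed
    qed
    also have "\<dots> = emeasure \<mu> B"
    proof (rule sum_emeasure_cover[symmetric])
      show "finite R" by fact
      show "B \<in> sets \<mu>" using B sets_mu by simp
      show "(\<lambda>s. q -` {s}) ` R \<subseteq> sets \<mu>" using cell_sets2[OF q(1)] sets_mu by auto
      show "B \<subseteq> (\<Union>s\<in>R. q -` {s})" using q(3) by auto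
      show "disjoint_family_on (\<lambda>s. q -` {s}) R" by (auto simp: disjoint_family_on_def)
    qed
    finally show "emeasure (distr \<pi> borel snd) B = emeasure \<mu> B" .
  qed
  show "\<pi> \<in> couplings \<nu> \<mu>" using sp d1 d2 by (simp add: couplings_def)
qed


lemma N_meas:
  assumes b: "balanced q R"
  shows "(\<lambda>x. distr (Kq q x) borel (\<lambda>y. (x, y))) \<in> distr \<mu> borel q \<rightarrow>\<^sub>M prob_algebra borel"
    "Kq q \<in> distr \<mu> borel q \<rightarrow>\<^sub>M prob_algebra borel"
proof -
  note bb = bal_basic[OF b]
  show Km: "Kq q \<in> distr \<mu> borel q \<rightarrow>\<^sub>M prob_algebra borel"
    using K_meas[OF b] bb(2) by (simp cong: measurable_cong_sets)
  have sb: "sets (distr \<mu> borel q \<Otimes>\<^sub>M (borel::'a measure)) = sets (borel :: ('a \<times> 'a) measure)"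
    using sets_pair_measure_cong[OF bb(2) refl, of borel] borel_prod by metis
  have Pm: "(\<lambda>(x, y). (x, y)) \<in> distr \<mu> borel q \<Otimes>\<^sub>M (borel::'a measure) \<rightarrow>\<^sub>M (borel :: ('a \<times> 'a) measure)"
    using measurable_ident_sets[OF sb] by (simp add: case_prod_beta')
  show "(\<lambda>x. distr (Kq q x) borel (\<lambda>y. (x, y))) \<in> distr \<mu> borel q \<rightarrow>\<^sub>M prob_algebra borel"
    by (rule measurable_distr_prob_space2[OF Km Pm])
qed

lemma mart_cond:
  assumes b: "balanced q R"
  shows "AE x in distr \<mu> borel q. integrable (Kq q x) (\<lambda>y. y) \<and> (\<integral>y. y \<partial>(Kq q x)) = x"
proof -
  have q: "q \<in> borel_measurable borel" "finite R" "\<forall>x. q x \<in> R" using b by (auto simp: balanced_def)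
  note bb = bal_basic[OF b]
  have nu_s: "emeasure (distr \<mu> borel q) {s} = emeasure \<mu> (q -` {s})" for s
    using bb(5) by (subst emeasure_distr) (auto simp: fin_borel)
  have ae1: "AE x in distr \<mu> borel q. x \<in> R" by (rule fin_supp_AE[OF bb(1,2,4,3)])
  have ae2: "AE x in distr \<mu> borel q. \<forall>s\<in>R. measure \<mu> (q -` {s}) = 0 \<longrightarrow> x \<noteq> s"
  proof (rule AE_finite_allI[OF q(2)])
    fix s assume "s \<in> R"
    show "AE x in distr \<mu> borel q. measure \<mu> (q -` {s}) = 0 \<longrightarrow> x \<noteq> s"
    proof (cases "measure \<mu> (q -` {s}) = 0")
      case True
      have "{s} \<in> null_sets (distr \<mu> borel q)"
        using True nu_s by (simp add: null_sets_def emeasure_eq_measure fin_borel)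
      from AE_not_in[OF this] show ?thesis by eventually_elim auto
    qed simp
  qed
  show ?thesis
    using ae1 ae2
  proof eventually_elim
    fix x assume x: "x \<in> R" "\<forall>s\<in>R. measure \<mu> (q -` {s}) = 0 \<longrightarrow> x \<noteq> s"
    let ?m = "measure \<mu> (q -` {x})"
    let ?C = "q -` {x}"
    have m: "?m \<noteq> 0" using x by auto
    have Cs: "?C \<in> sets \<mu>" using cell_sets2[OF q(1)] sets_mu by simp
    define g where "g y = indicator ?C y / ?m" for y
    have gm: "g \<in> borel_measurable \<mu>" unfolding g_def using Cs by measurable
    have K: "Kq q x = density \<mu> (\<lambda>y. ennreal (g y))" using m by (simp add: Kq_def g_def)
    have idm: "(\<lambda>y::'a. y) \<in> borel_measurable \<mu>" by simp
    have g0: "AE y in \<mu>. 0 \<le> g y" by (simp add: g_def)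
    have gi: "(\<lambda>y. g y *\<^sub>R y) = (\<lambda>y. (1 / ?m) *\<^sub>R (indicator ?C y *\<^sub>R y))" by (auto simp: g_def)
    have ii: "integrable \<mu> (\<lambda>y. indicator ?C y *\<^sub>R y)" by (rule integrable_mult_indicator[OF Cs int_id])
    have ii2: "integrable \<mu> (\<lambda>y. (1 / ?m) *\<^sub>R (indicator ?C y *\<^sub>R y))" by (rule integrable_scaleR_right) (rule ii)
    have "integrable \<mu> (\<lambda>y. g y *\<^sub>R y)" by (subst gi) (rule ii2)
    then have int: "integrable (Kq q x) (\<lambda>y. y)" unfolding K using integrable_density[OF idm gm g0] by simp
    have "(\<integral>y. y \<partial>(Kq q x)) = (\<integral>y. g y *\<^sub>R y \<partial>\<mu>)" unfolding K by (rule integral_density[OF idm gm g0])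
    also have "\<dots> = (1 / ?m) *\<^sub>R (\<integral>y. indicator ?C y *\<^sub>R y \<partial>\<mu>)" by (simp only: gi integral_scaleR_right)
    also have "(\<integral>y. indicator ?C y *\<^sub>R y \<partial>\<mu>) = ?m *\<^sub>R x"
    proof -
      have "(\<integral>y. indicator ?C y *\<^sub>R (y - x) \<partial>\<mu>) = 0" using b x(1) by (simp add: balanced_def)
      then show ?thesis using cell_int_diff[OF cell_sets2[OF q(1)], of x] by simp
    qed
    finally have "(\<integral>y. y \<partial>(Kq q x)) = x" using m by simp
    with int show "integrable (Kq q x) (\<lambda>y. y) \<and> (\<integral>y. y \<partial>(Kq q x)) = x" by simp
  qed
qed

lemma mart_cost:
  assumes b: "balanced q R"
  defines "\<pi> \<equiv> distr \<mu> borel q \<bind> (\<lambda>x. distr (Kq q x) borel (\<lambda>y. (x, y)))"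
  shows "(\<integral>\<^sup>+ z. ennreal ((dist (fst z) (snd z))^2) \<partial>\<pi>) = ennreal (\<integral>x. dist x (q x) ^ 2 \<partial>\<mu>)"
proof -
  have q: "q \<in> borel_measurable borel" "finite R" "\<forall>x. q x \<in> R" using b by (auto simp: balanced_def)
  note bb = bal_basic[OF b]
  note Nm = N_meas(1)[OF b]
  have nu_s: "emeasure (distr \<mu> borel q) {s} = emeasure \<mu> (q -` {s})" for s
    using bb(5) by (subst emeasure_distr) (auto simp: fin_borel)
  have pairm: "(\<lambda>y. (x, y)) \<in> Kq q x \<rightarrow>\<^sub>M borel" for x
  proof -
    have "(\<lambda>y. (x, y)) \<in> (borel::'a measure) \<rightarrow>\<^sub>M borel"
      by (intro borel_measurable_continuous_onI continuous_intros)
    then show ?thesis using K_sets by (simp cong: measurable_cong_sets)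
  qed
  define T where "T s = (\<integral>\<^sup>+ y. ennreal (dist s y ^ 2) * indicator (q -` {s}) y \<partial>\<mu>)" for s
  have "(\<integral>\<^sup>+ z. ennreal ((dist (fst z) (snd z))^2) \<partial>\<pi>)
      = (\<integral>\<^sup>+ x. \<integral>\<^sup>+ z. ennreal ((dist (fst z) (snd z))^2) \<partial>distr (Kq q x) borel (\<lambda>y. (x, y)) \<partial>distr \<mu> borel q)"
    unfolding \<pi>_def by (rule nn_integral_bind[OF dist_sq_meas_enn measurable_prob_algebraD[OF Nm]])
  also have "\<dots> = (\<integral>\<^sup>+ x. \<integral>\<^sup>+ y. ennreal (dist x y ^ 2) \<partial>Kq q x \<partial>distr \<mu> borel q)"
  proof (intro nn_integral_cong)
    fix x
    have mm: "(\<lambda>z::'a\<times>'a. ennreal ((dist (fst z) (snd z))^2)) \<in> borel_measurable (distr (Kq q x) borel (\<lambda>y. (x, y)))"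
      using dist_sq_meas_enn by simp
    show "(\<integral>\<^sup>+ z. ennreal ((dist (fst z) (snd z))^2) \<partial>distr (Kq q x) borel (\<lambda>y. (x, y))) = (\<integral>\<^sup>+ y. ennreal (dist x y ^ 2) \<partial>Kq q x)"
      using nn_integral_distr[OF pairm mm] by simp
  qed
  also have "\<dots> = (\<Sum>s\<in>R. (\<integral>\<^sup>+ y. ennreal (dist s y ^ 2) \<partial>Kq q s) * emeasure (distr \<mu> borel q) {s})"
    by (rule fin_supp_nn[OF bb(1,2,4,3)])
  also have "\<dots> = (\<Sum>s\<in>R. T s)"
  proof (intro sum.cong refl)
    fix s assume "s \<in> R"
    let ?m = "measure \<mu> (q -` {s})"
    have Cs: "q -` {s} \<in> sets \<mu>" using cell_sets2[OF q(1)] sets_mu by simp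
    show "(\<integral>\<^sup>+ y. ennreal (dist s y ^ 2) \<partial>Kq q s) * emeasure (distr \<mu> borel q) {s} = T s"
    proof (cases "?m = 0")
      case True
      have "q -` {s} \<in> null_sets \<mu>" using True Cs by (simp add: null_sets_def emeasure_eq_measure)
      then have "AE y in \<mu>. y \<notin> q -` {s}" by (rule AE_not_in)
      then have "AE y in \<mu>. ennreal (dist s y ^ 2) * indicator (q -` {s}) y = 0"
        by eventually_elim simp
      then have "T s = (\<integral>\<^sup>+ y. 0 \<partial>\<mu>)" unfolding T_def by (rule nn_integral_cong_AE)
      then have "T s = 0" by simp
      moreover have "emeasure (distr \<mu> borel q) {s} = 0" using nu_s True by (simp add: emeasure_eq_measure)
      ultimately show ?thesis by simp
    next
      case False
      have m0: "?m > 0" using False measure_nonneg[of \<mu> "q -` {s}"] by linarith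
      have gm: "(\<lambda>y. ennreal (indicator (q -` {s}) y / ?m)) \<in> borel_measurable \<mu>" using Cs by measurable
      have dm: "(\<lambda>y. ennreal (dist s y ^ 2)) \<in> borel_measurable \<mu>"
      proof -
        have "(\<lambda>y::'a. dist s y ^ 2) \<in> borel_measurable borel"
          by (intro borel_measurable_continuous_onI continuous_intros)
        then show ?thesis by (simp add: meas_mu)
      qed
      have "(\<integral>\<^sup>+ y. ennreal (dist s y ^ 2) \<partial>Kq q s)
          = (\<integral>\<^sup>+ y. ennreal (indicator (q -` {s}) y / ?m) * ennreal (dist s y ^ 2) \<partial>\<mu>)"
        using False by (simp add: Kq_def nn_integral_density[OF gm dm])
      also have "\<dots> = (\<integral>\<^sup>+ y. ennreal (1 / ?m) * (ennreal (dist s y ^ 2) * indicator (q -` {s}) y) \<partial>\<mu>)"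
        by (intro nn_integral_cong) (simp split: split_indicator)
      also have "\<dots> = ennreal (1 / ?m) * T s" unfolding T_def
        by (rule nn_integral_cmult) (use dm Cs in measurable)
      finally have "(\<integral>\<^sup>+ y. ennreal (dist s y ^ 2) \<partial>Kq q s) * emeasure (distr \<mu> borel q) {s}
          = T s * (ennreal (1 / ?m) * ennreal ?m)"
        using nu_s by (simp add: emeasure_eq_measure ac_simps)
      also have "ennreal (1 / ?m) * ennreal ?m = 1" using m0 by (simp flip: ennreal_mult)
      finally show ?thesis by simp
    qed
  qed
  also have "\<dots> = (\<integral>\<^sup>+ y. (\<Sum>s\<in>R. ennreal (dist s y ^ 2) * indicator (q -` {s}) y) \<partial>\<mu>)"
    unfolding T_def
  proof (rule nn_integral_sum[symmetric])
    fix s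
    have "(\<lambda>y::'a. dist s y ^ 2) \<in> borel_measurable borel"
      by (intro borel_measurable_continuous_onI continuous_intros)
    then show "(\<lambda>y. ennreal (dist s y ^ 2) * indicator (q -` {s}) y) \<in> borel_measurable \<mu>"
      using cell_sets2[OF q(1)] by (simp add: meas_mu)
  qed
  also have "\<dots> = (\<integral>\<^sup>+ y. ennreal (dist y (q y) ^ 2) \<partial>\<mu>)"
  proof (intro nn_integral_cong)
    fix y
    have "(\<Sum>s\<in>R. ennreal (dist s y ^ 2) * indicator (q -` {s}) y) = (\<Sum>s\<in>R. if q y = s then ennreal (dist (q y) y ^ 2) else 0)"
      by (intro sum.cong) (auto simp: indicator_def)
    also have "\<dots> = ennreal (dist y (q y) ^ 2)" using q(2,3) by (simp add: dist_commute)
    finally show "(\<Sum>s\<in>R. ennreal (dist s y ^ 2) * indicator (q -` {s}) y) = ennreal (dist y (q y) ^ 2)" .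
  qed
  also have "\<dots> = ennreal (\<integral>x. dist x (q x) ^ 2 \<partial>\<mu>)"
    by (rule nn_integral_eq_integral[OF int_dist_q[OF q]]) simp
  finally show ?thesis .
qed

end


context qz begin

lemma Pc_props:
  assumes "\<eta> \<in> Pcvx \<mu> N"
  obtains S where "prob_space \<eta>" "sets \<eta> = sets borel" "finite S" "card S \<le> N" "emeasure \<eta> S = 1"
    "S \<noteq> {}" "cvx_le \<eta> \<mu>"
proof -
  from assms obtain S where "prob_space \<eta>" "sets \<eta> = sets borel" "finite S" "card S \<le> N" "emeasure \<eta> S = 1"
    "cvx_le \<eta> \<mu>" by (auto simp: Pcvx_def PN_def)
  moreover then have "S \<noteq> {}" by auto
  ultimately show ?thesis using that by blast
qed

lemma W2_nonneg: "W2 a b \<ge> 0"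
  by (simp add: W2_def)

lemma Pc_W2_lower:
  assumes "\<eta> \<in> Pcvx \<mu> N" "opt_quantizer \<mu> N \<Gamma>"
  shows "sqrt (Dst \<Gamma>) \<le> W2 \<mu> \<eta>"
proof -
  obtain S where S: "prob_space \<eta>" "sets \<eta> = sets borel" "finite S" "card S \<le> N" "emeasure \<eta> S = 1"
    "S \<noteq> {}" "cvx_le \<eta> \<mu>" using Pc_props[OF assms(1)] by blast
  have "Dst \<Gamma> \<le> Dst S" by (rule Dst_le_of_opt[OF assms(2) S(3,6,4)])
  also have "\<dots> \<le> W2 \<mu> \<eta> ^ 2" by (rule W2_lower[OF S(1,2,3,5)])
  finally have "sqrt (Dst \<Gamma>) \<le> sqrt (W2 \<mu> \<eta> ^ 2)" by (rule real_sqrt_le_mono)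
  then show ?thesis using W2_nonneg[of \<mu> \<eta>] by simp
qed

lemma Pc_m2_upper:
  assumes "\<eta> \<in> Pcvx \<mu> N" "opt_quantizer \<mu> N \<Gamma>"
  shows "(\<integral>x. norm x ^ 2 \<partial>\<eta>) \<le> (\<integral>x. norm x ^ 2 \<partial>\<mu>) - Dst \<Gamma>"
proof -
  obtain S where S: "prob_space \<eta>" "sets \<eta> = sets borel" "finite S" "card S \<le> N" "emeasure \<eta> S = 1"
    "S \<noteq> {}" "cvx_le \<eta> \<mu>" using Pc_props[OF assms(1)] by blast
  have "Dst \<Gamma> \<le> Dst S" by (rule Dst_le_of_opt[OF assms(2) S(3,6,4)])
  moreover have "(\<integral>x. norm x ^ 2 \<partial>\<eta>) \<le> (\<integral>x. norm x ^ 2 \<partial>\<mu>) - Dst S" by (rule F2[OF S(7,1,2,3,5)])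
  ultimately show ?thesis by simp
qed

lemma Pc_m2_bdd: "\<eta> \<in> Pcvx \<mu> N \<Longrightarrow> (\<integral>x. norm x ^ 2 \<partial>\<eta>) \<le> (\<integral>x. norm x ^ 2 \<partial>\<mu>)"
proof -
  assume "\<eta> \<in> Pcvx \<mu> N"
  then obtain S where S: "prob_space \<eta>" "sets \<eta> = sets borel" "finite S" "card S \<le> N" "emeasure \<eta> S = 1"
    "S \<noteq> {}" "cvx_le \<eta> \<mu>" using Pc_props by blast
  from F2[OF S(7,1,2,3,5)] Dst_nonneg[of S] show ?thesis by simp
qed

lemma bddW: "bdd_below ((\<lambda>\<eta>. W2 \<mu> \<eta>) ` A)"
  by (rule bdd_belowI[of _ 0]) (auto simp: W2_nonneg)

lemma bddM: "bdd_above ((\<lambda>\<eta>. \<integral>x. norm x ^ 2 \<partial>\<eta>) ` Pcvx \<mu> N)"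
  by (rule bdd_aboveI[of _ "\<integral>x. norm x ^ 2 \<partial>\<mu>"]) (auto intro: Pc_m2_bdd)

lemma Pc_upper:
  assumes "finite \<Gamma>'" "\<Gamma>' \<noteq> {}" "card \<Gamma>' \<le> N"
  shows "(INF \<eta>\<in>Pcvx \<mu> N. W2 \<mu> \<eta>) \<le> sqrt (Dst \<Gamma>')"
    "(\<integral>x. norm x ^ 2 \<partial>\<mu>) - Dst \<Gamma>' \<le> (SUP \<eta>\<in>Pcvx \<mu> N. \<integral>x. norm x ^ 2 \<partial>\<eta>)"
    "Pcvx \<mu> N \<noteq> {}"
proof -
  obtain q R where qR: "balanced q R" "card R \<le> card \<Gamma>'" "(\<integral>x. dist x (q x) ^ 2 \<partial>\<mu>) \<le> Dst \<Gamma>'"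
    using F4[OF assms(1,2)] by blast
  have inP: "distr \<mu> borel q \<in> Pcvx \<mu> N" using bal_Pcvx[OF qR(1)] qR(2) assms(3) by simp
  then show "Pcvx \<mu> N \<noteq> {}" by blast
  have "(INF \<eta>\<in>Pcvx \<mu> N. W2 \<mu> \<eta>) \<le> W2 \<mu> (distr \<mu> borel q)" by (rule cINF_lower[OF bddW inP])
  also have "\<dots> \<le> sqrt (\<integral>x. dist x (q x) ^ 2 \<partial>\<mu>)" by (rule bal_W2[OF qR(1)])
  also have "\<dots> \<le> sqrt (Dst \<Gamma>')" using qR(3) by simp
  finally show "(INF \<eta>\<in>Pcvx \<mu> N. W2 \<mu> \<eta>) \<le> sqrt (Dst \<Gamma>')" .
  have "(\<integral>x. norm x ^ 2 \<partial>\<mu>) - Dst \<Gamma>' \<le> (\<integral>x. norm x ^ 2 \<partial>distr \<mu> borel q)"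
    using bal_m2[OF qR(1)] qR(3) by simp
  also have "\<dots> \<le> (SUP \<eta>\<in>Pcvx \<mu> N. \<integral>x. norm x ^ 2 \<partial>\<eta>)" by (rule cSUP_upper[OF inP bddM])
  finally show "(\<integral>x. norm x ^ 2 \<partial>\<mu>) - Dst \<Gamma>' \<le> (SUP \<eta>\<in>Pcvx \<mu> N. \<integral>x. norm x ^ 2 \<partial>\<eta>)" .
qed

lemma opt_nu0:
  assumes opt: "opt_quantizer \<mu> N \<Gamma>" and p: "nn_proj \<Gamma> p"
  shows "distr \<mu> borel p \<in> Pcvx \<mu> N" "emeasure (distr \<mu> borel p) \<Gamma> = 1"
    "W2 \<mu> (distr \<mu> borel p) = (INF \<eta>\<in>Pcvx \<mu> N. W2 \<mu> \<eta>)"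
    "(\<integral>x. norm x ^ 2 \<partial>distr \<mu> borel p) = (SUP \<eta>\<in>Pcvx \<mu> N. \<integral>x. norm x ^ 2 \<partial>\<eta>)"
proof -
  have G: "finite \<Gamma>" "\<Gamma> \<noteq> {}" "card \<Gamma> \<le> N" using opt by (auto simp: opt_quantizer_def)
  have b: "balanced p \<Gamma>" by (rule F5[OF opt p])
  have dp: "(\<integral>x. dist x (p x) ^ 2 \<partial>\<mu>) = Dst \<Gamma>" unfolding Dst_def using nn_proj_props(3)[OF p] by simp
  show inP: "distr \<mu> borel p \<in> Pcvx \<mu> N" by (rule bal_Pcvx[OF b G(3)])
  show "emeasure (distr \<mu> borel p) \<Gamma> = 1" by (rule bal_basic(3)[OF b])
  have "W2 \<mu> (distr \<mu> borel p) \<le> sqrt (Dst \<Gamma>)" using bal_W2[OF b] dp by simp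
  then have le: "\<And>\<eta>. \<eta> \<in> Pcvx \<mu> N \<Longrightarrow> W2 \<mu> (distr \<mu> borel p) \<le> W2 \<mu> \<eta>"
    using Pc_W2_lower[OF _ opt] order_trans by blast
  show "W2 \<mu> (distr \<mu> borel p) = (INF \<eta>\<in>Pcvx \<mu> N. W2 \<mu> \<eta>)"
    by (rule antisym[OF cINF_greatest[OF _ le] cINF_lower[OF bddW inP]]) (use inP in auto)
  have "(\<integral>x. norm x ^ 2 \<partial>distr \<mu> borel p) = (\<integral>x. norm x ^ 2 \<partial>\<mu>) - Dst \<Gamma>" using bal_m2[OF b] dp by simp
  then have ge: "\<And>\<eta>. \<eta> \<in> Pcvx \<mu> N \<Longrightarrow> (\<integral>x. norm x ^ 2 \<partial>\<eta>) \<le> (\<integral>x. norm x ^ 2 \<partial>distr \<mu> borel p)"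
    using Pc_m2_upper[OF _ opt] by simp
  show "(\<integral>x. norm x ^ 2 \<partial>distr \<mu> borel p) = (SUP \<eta>\<in>Pcvx \<mu> N. \<integral>x. norm x ^ 2 \<partial>\<eta>)"
    by (rule antisym[OF cSUP_upper[OF inP bddM] cSUP_least[OF _ ge]]) (use inP in auto)
qed

end


context qz begin

lemma lim_U:
  assumes g: "\<gamma> \<in> \<Gamma>" and h: "\<And>\<epsilon>. \<epsilon> > 0 \<Longrightarrow> a \<le> measure \<mu> {x. dist x \<gamma> ^ 2 - \<epsilon> < infdist x \<Gamma> ^ 2}"
  shows "a \<le> measure \<mu> (Acl \<Gamma> \<gamma>)"
proof -
  define A where "A n = {x. dist x \<gamma> ^ 2 - 1 / Suc n < infdist x \<Gamma> ^ 2}" for n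
  have An: "A n \<in> sets \<mu>" for n unfolding A_def sets_mu by (rule U_sets)
  then have rA: "range A \<subseteq> sets \<mu>" by blast
  have dA: "decseq A"
  proof (rule decseq_SucI)
    fix n
    have le: "1 / real (Suc (Suc n)) \<le> 1 / real (Suc n)" by (simp add: frac_le)
    show "A (Suc n) \<subseteq> A n"
    proof
      fix x assume "x \<in> A (Suc n)"
      then have "dist x \<gamma> ^ 2 - 1 / real (Suc (Suc n)) < infdist x \<Gamma> ^ 2" by (simp add: A_def)
      then have "dist x \<gamma> ^ 2 - 1 / real (Suc n) < infdist x \<Gamma> ^ 2" using le by linarith
      then show "x \<in> A n" by (simp add: A_def)
    qed
  qed
  have IA: "(\<Inter>n. A n) = Acl \<Gamma> \<gamma>"
  proof
    show "Acl \<Gamma> \<gamma> \<subseteq> (\<Inter>n. A n)"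
    proof
      fix x assume "x \<in> Acl \<Gamma> \<gamma>"
      then have e: "dist x \<gamma> = infdist x \<Gamma>" by (simp add: Acl_def)
      have "dist x \<gamma> ^ 2 - 1 / real (Suc n) < infdist x \<Gamma> ^ 2" for n unfolding e by simp
      then show "x \<in> (\<Inter>n. A n)" by (simp add: A_def)
    qed
    show "(\<Inter>n. A n) \<subseteq> Acl \<Gamma> \<gamma>"
    proof
      fix x assume x: "x \<in> (\<Inter>n. A n)"
      have le1: "infdist x \<Gamma> \<le> dist x \<gamma>" by (rule infdist_le[OF g])
      have "dist x \<gamma> ^ 2 \<le> infdist x \<Gamma> ^ 2"
      proof (rule ccontr)
        assume "\<not> ?thesis"
        then have "0 < dist x \<gamma> ^ 2 - infdist x \<Gamma> ^ 2" by simp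
        from ex_inverse_of_nat_less[OF this] obtain n where n: "n > 0" "inverse (real n) < dist x \<gamma> ^ 2 - infdist x \<Gamma> ^ 2" by blast
        have "1 / real (Suc n) \<le> inverse (real n)" using n(1) by (simp add: inverse_eq_divide frac_le)
        moreover have "x \<in> A n" using x by blast
        then have "dist x \<gamma> ^ 2 - 1 / real (Suc n) < infdist x \<Gamma> ^ 2" by (simp add: A_def)
        ultimately show False using n(2) by linarith
      qed
      then have "dist x \<gamma> \<le> infdist x \<Gamma>" by (rule power2_le_imp_le[OF _ infdist_nonneg])
      then show "x \<in> Acl \<Gamma> \<gamma>" using le1 by (simp add: Acl_def)
    qed
  qed
  have lim: "(\<lambda>n. measure \<mu> (A n)) \<longlonglongrightarrow> measure \<mu> (Acl \<Gamma> \<gamma>)"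
    using finite_Lim_measure_decseq[OF rA dA] IA by simp
  have "a \<le> measure \<mu> (A n)" for n unfolding A_def by (rule h) simp
  then show ?thesis by (intro LIMSEQ_le_const[OF lim] exI[of _ 0] allI impI)
qed

lemma proj_bound:
  assumes opt: "opt_quantizer \<mu> N \<Gamma>" and p: "nn_proj \<Gamma> p" and g: "\<gamma> \<in> \<Gamma>"
  shows "measure \<mu> (Acl \<Gamma> \<gamma>) \<le> measure \<mu> (p -` {\<gamma>})"
proof -
  have G: "finite \<Gamma>" using opt by (simp add: opt_quantizer_def)
  note pp = nn_proj_props[OF p]
  define B where "B = (\<Union>t\<in>\<Gamma> - {\<gamma>}. Acl \<Gamma> \<gamma> \<inter> Acl \<Gamma> t)"
  have Cs: "p -` {\<gamma>} \<in> sets \<mu>" using cell_sets2[OF pp(1)] sets_mu by simp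
  have Bs: "B \<in> sets \<mu>" unfolding B_def sets_mu using G by (intro sets.finite_UN sets.Int Acl_sets) auto
  have sub: "Acl \<Gamma> \<gamma> \<subseteq> p -` {\<gamma>} \<union> B"
  proof
    fix x assume x: "x \<in> Acl \<Gamma> \<gamma>"
    show "x \<in> p -` {\<gamma>} \<union> B"
    proof (cases "p x = \<gamma>")
      case False
      have "x \<in> Acl \<Gamma> (p x)" using pp(3)[of x] by (simp add: Acl_def)
      then show ?thesis using False x pp(2)[of x] by (auto simp: B_def)
    qed simp
  qed
  have "measure \<mu> (Acl \<Gamma> \<gamma>) \<le> measure \<mu> (p -` {\<gamma>} \<union> B)"
    by (rule finite_measure_mono[OF sub]) (use Cs Bs in auto)
  also have "\<dots> \<le> measure \<mu> (p -` {\<gamma>}) + measure \<mu> B"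
  proof -
    have f: "\<And>A. emeasure \<mu> A \<noteq> \<infinity>" by (simp add: emeasure_eq_measure)
    show ?thesis by (rule measure_subadditive[OF Cs Bs f f])
  qed
  also have "measure \<mu> B \<le> (\<Sum>t\<in>\<Gamma> - {\<gamma>}. measure \<mu> (Acl \<Gamma> \<gamma> \<inter> Acl \<Gamma> t))"
    unfolding B_def using G by (intro measure_UNION_le) (auto intro: sets.Int Acl_sets simp: sets_mu)
  also have "\<dots> = 0" using bnd_null[OF opt g] by (intro sum.neutral) auto
  finally show ?thesis by simp
qed

lemma nu_eq:
  assumes nu: "prob_space \<nu>" "sets \<nu> = sets borel" "emeasure \<nu> \<Gamma> = 1" "finite \<Gamma>"
    and p: "nn_proj \<Gamma> p" and le: "\<And>\<gamma>. \<gamma> \<in> \<Gamma> \<Longrightarrow> measure \<nu> {\<gamma>} \<le> measure \<mu> (p -` {\<gamma>})"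
  shows "\<nu> = distr \<mu> borel p"
proof -
  interpret V: prob_space \<nu> by fact
  note pp = nn_proj_props[OF p]
  have pm: "p \<in> \<mu> \<rightarrow>\<^sub>M borel" using pp(1) by (simp add: meas_mu)
  define \<eta> where "\<eta> = distr \<mu> borel p"
  have eta: "prob_space \<eta>" "sets \<eta> = sets borel" unfolding \<eta>_def by (auto intro: prob_space_distr[OF pm])
  interpret E: prob_space \<eta> by (rule eta(1))
  have eG: "emeasure \<eta> \<Gamma> = 1"
  proof -
    have "emeasure \<eta> \<Gamma> = emeasure \<mu> (p -` \<Gamma> \<inter> space \<mu>)" unfolding \<eta>_def
      by (rule emeasure_distr[OF pm fin_borel[OF nu(4)]])
    also have "p -` \<Gamma> \<inter> space \<mu> = space \<mu>" using pp(2) by auto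
    finally show ?thesis using emeasure_space_1 by simp
  qed
  have ms: "measure \<eta> {\<gamma>} = measure \<mu> (p -` {\<gamma>})" for \<gamma>
    unfolding \<eta>_def by (subst measure_distr[OF pm]) auto
  have s1: "(\<Sum>\<gamma>\<in>\<Gamma>. measure \<nu> {\<gamma>}) = 1"
    using measure_eq_sum_singleton[OF nu(4), of \<nu>] nu(2,3) by (simp add: V.emeasure_eq_measure)
  have s2: "(\<Sum>\<gamma>\<in>\<Gamma>. measure \<eta> {\<gamma>}) = 1"
    using measure_eq_sum_singleton[OF nu(4), of \<eta>] eta(2) eG by (simp add: E.emeasure_eq_measure)
  have eqs: "measure \<nu> {\<gamma>} = measure \<eta> {\<gamma>}" if g: "\<gamma> \<in> \<Gamma>" for \<gamma>
  proof (rule ccontr)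
    assume ne: "measure \<nu> {\<gamma>} \<noteq> measure \<eta> {\<gamma>}"
    have "(\<Sum>\<gamma>\<in>\<Gamma>. measure \<nu> {\<gamma>}) < (\<Sum>\<gamma>\<in>\<Gamma>. measure \<eta> {\<gamma>})"
    proof (rule sum_strict_mono_ex1[OF nu(4)])
      show "\<forall>x\<in>\<Gamma>. measure \<nu> {x} \<le> measure \<eta> {x}" using le ms by simp
      show "\<exists>a\<in>\<Gamma>. measure \<nu> {a} < measure \<eta> {a}" using le[OF g] ms[of \<gamma>] ne g by force
    qed
    then show False using s1 s2 by simp
  qed
  show ?thesis
  proof (rule measure_eqI)
    show "sets \<nu> = sets (distr \<mu> borel p)" using nu(2) by simp
    fix A assume "A \<in> sets \<nu>"
    have "emeasure \<nu> A = (\<integral>\<^sup>+x. indicator A x \<partial>\<nu>)" using \<open>A \<in> sets \<nu>\<close> by simp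
    also have "\<dots> = (\<Sum>s\<in>\<Gamma>. indicator A s * emeasure \<nu> {s})" by (rule fin_supp_nn[OF nu(1,2,4,3)])
    also have "\<dots> = (\<Sum>s\<in>\<Gamma>. indicator A s * emeasure \<eta> {s})"
      using eqs by (intro sum.cong refl) (simp add: V.emeasure_eq_measure E.emeasure_eq_measure)
    also have "\<dots> = (\<integral>\<^sup>+x. indicator A x \<partial>\<eta>)" by (rule fin_supp_nn[OF eta nu(4) eG, symmetric])
    also have "\<dots> = emeasure \<eta> A" using \<open>A \<in> sets \<nu>\<close> nu(2) eta(2) by simp
    finally show "emeasure \<nu> A = emeasure (distr \<mu> borel p) A" by (simp add: \<eta>_def)
  qed
qed

lemma W2_M2:
  assumes opt: "opt_quantizer \<mu> N \<Gamma>" and p: "nn_proj \<Gamma> p"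
  shows "W2 (distr \<mu> borel p) \<mu> = M2 (distr \<mu> borel p) \<mu>"
proof -
  have G: "finite \<Gamma>" "\<Gamma> \<noteq> {}" using opt by (auto simp: opt_quantizer_def)
  have b: "balanced p \<Gamma>" by (rule F5[OF opt p])
  note bb = bal_basic[OF b]
  have dp: "(\<integral>x. dist x (p x) ^ 2 \<partial>\<mu>) = Dst \<Gamma>" unfolding Dst_def using nn_proj_props(3)[OF p] by simp
  define \<nu> where "\<nu> = distr \<mu> borel p"
  define \<pi> where "\<pi> = \<nu> \<bind> (\<lambda>x. distr (Kq p x) borel (\<lambda>y. (x, y)))"
  let ?c = "\<lambda>\<pi>. \<integral>\<^sup>+ z. ennreal ((dist (fst z) (snd z))^2) \<partial>\<pi>"
  have pim: "\<pi> \<in> mart_couplings \<nu> \<mu>"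
    unfolding mart_couplings_def
  proof (intro CollectI conjI exI)
    show "\<pi> \<in> couplings \<nu> \<mu>" unfolding \<pi>_def \<nu>_def by (rule mart_cpl[OF b])
    show "Kq p \<in> \<nu> \<rightarrow>\<^sub>M prob_algebra borel" unfolding \<nu>_def by (rule N_meas(2)[OF b])
    show "\<pi> = \<nu> \<bind> (\<lambda>x. distr (Kq p x) borel (\<lambda>y. (x, y)))" by (simp add: \<pi>_def)
    show "AE x in \<nu>. integrable (Kq p x) (\<lambda>y. y) \<and> (\<integral>y. y \<partial>Kq p x) = x"
      unfolding \<nu>_def by (rule mart_cond[OF b])
  qed
  have cpi: "?c \<pi> = ennreal (Dst \<Gamma>)" unfolding \<pi>_def \<nu>_def using mart_cost[OF b] dp by simp
  have M: "(INF \<pi>\<in>mart_couplings \<nu> \<mu>. ?c \<pi>) \<le> ennreal (Dst \<Gamma>)"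
    by (rule INF_lower2[OF pim]) (simp add: cpi)
  have W: "ennreal (Dst \<Gamma>) \<le> (INF \<pi>\<in>couplings \<nu> \<mu>. ?c \<pi>)"
  proof (rule INF_greatest)
    fix \<pi>' assume pi': "\<pi>' \<in> couplings \<nu> \<mu>"
    note c = cpl_basic[OF pi']
    have ae: "AE z in \<pi>'. fst z \<in> \<Gamma>"
      by (rule cpl_AE_fst[OF pi' fin_supp_AE[OF bb(1,2,4,3)[folded \<nu>_def]] fin_borel[OF G(1)]])
    have "ennreal (Dst \<Gamma>) = (\<integral>\<^sup>+x. ennreal (infdist x \<Gamma> ^ 2) \<partial>\<mu>)"
      using distortion_eq[OF G(2)] by (simp add: distortion_def)
    also have "\<dots> = (\<integral>\<^sup>+z. ennreal (infdist (snd z) \<Gamma> ^ 2) \<partial>\<pi>')"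
      by (rule cpl_marg_snd[OF pi', symmetric]) (use infd_meas in simp)
    also have "\<dots> \<le> ?c \<pi>'"
    proof (rule nn_integral_mono_AE)
      show "AE z in \<pi>'. ennreal (infdist (snd z) \<Gamma> ^ 2) \<le> ennreal ((dist (fst z) (snd z))^2)"
        using ae
      proof eventually_elim
        fix z :: "'a \<times> 'a" assume "fst z \<in> \<Gamma>"
        from power_mono[OF infdist_le[OF this, of "snd z"] infdist_nonneg]
        show "ennreal (infdist (snd z) \<Gamma> ^ 2) \<le> ennreal ((dist (fst z) (snd z))^2)"
          by (simp add: dist_commute ennreal_leI)
      qed
    qed
    finally show "ennreal (Dst \<Gamma>) \<le> ?c \<pi>'" .
  qed
  have sub: "(INF \<pi>\<in>couplings \<nu> \<mu>. ?c \<pi>) \<le> (INF \<pi>\<in>mart_couplings \<nu> \<mu>. ?c \<pi>)"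
    by (rule INF_superset_mono) (auto simp: mart_couplings_def)
  have e1: "(INF \<pi>\<in>couplings \<nu> \<mu>. ?c \<pi>) = ennreal (Dst \<Gamma>)" by (rule antisym[OF order_trans[OF sub M] W])
  have e2: "(INF \<pi>\<in>mart_couplings \<nu> \<mu>. ?c \<pi>) = ennreal (Dst \<Gamma>)" by (rule antisym[OF M order_trans[OF W sub]])
  show ?thesis unfolding W2_def M2_def \<nu>_def[symmetric] e1 e2 ..
qed

end


context qz begin

lemma iffW:
  fixes \<Gamma> :: "'a set"
  assumes G: "finite \<Gamma>" "card \<Gamma> \<le> N"
  shows "opt_quantizer \<mu> N \<Gamma> \<longleftrightarrow>
     (\<exists>\<nu>\<in>Pcvx \<mu> N. emeasure \<nu> \<Gamma> = 1 \<and> W2 \<mu> \<nu> = (INF \<eta>\<in>Pcvx \<mu> N. W2 \<mu> \<eta>))"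
proof
  assume opt: "opt_quantizer \<mu> N \<Gamma>"
  then have "\<Gamma> \<noteq> {}" by (simp add: opt_quantizer_def)
  then obtain p where p: "nn_proj \<Gamma> p" using nn_proj_ex[OF G(1)] by blast
  from opt_nu0[OF opt p] show "\<exists>\<nu>\<in>Pcvx \<mu> N. emeasure \<nu> \<Gamma> = 1 \<and> W2 \<mu> \<nu> = (INF \<eta>\<in>Pcvx \<mu> N. W2 \<mu> \<eta>)"
    by blast
next
  assume "\<exists>\<nu>\<in>Pcvx \<mu> N. emeasure \<nu> \<Gamma> = 1 \<and> W2 \<mu> \<nu> = (INF \<eta>\<in>Pcvx \<mu> N. W2 \<mu> \<eta>)"
  then obtain \<nu> where nu: "\<nu> \<in> Pcvx \<mu> N" "emeasure \<nu> \<Gamma> = 1" "W2 \<mu> \<nu> = (INF \<eta>\<in>Pcvx \<mu> N. W2 \<mu> \<eta>)" by blast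
  obtain S where S: "prob_space \<nu>" "sets \<nu> = sets borel" "finite S" "card S \<le> N" "emeasure \<nu> S = 1"
    "S \<noteq> {}" "cvx_le \<nu> \<mu>" using Pc_props[OF nu(1)] by blast
  have Gne: "\<Gamma> \<noteq> {}" using nu(2) by auto
  have low: "Dst \<Gamma> \<le> W2 \<mu> \<nu> ^ 2" by (rule W2_lower[OF S(1,2) G(1) nu(2)])
  show "opt_quantizer \<mu> N \<Gamma>"
    unfolding opt_quantizer_def
  proof (intro conjI G Gne allI impI)
    fix \<Gamma>' :: "'a set" assume h: "finite \<Gamma>' \<and> \<Gamma>' \<noteq> {} \<and> card \<Gamma>' \<le> N"
    have "W2 \<mu> \<nu> \<le> sqrt (Dst \<Gamma>')" using Pc_upper(1)[of \<Gamma>'] h nu(3) by simp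
    then have "W2 \<mu> \<nu> ^ 2 \<le> sqrt (Dst \<Gamma>') ^ 2" using W2_nonneg by (intro power_mono) auto
    then have "Dst \<Gamma> \<le> Dst \<Gamma>'" using low Dst_nonneg[of \<Gamma>'] by simp
    then show "distortion \<mu> \<Gamma> \<le> distortion \<mu> \<Gamma>'" using h Gne by (simp add: distortion_eq ennreal_leI)
  qed
qed

lemma iffM:
  fixes \<Gamma> :: "'a set"
  assumes G: "finite \<Gamma>" "card \<Gamma> \<le> N"
  shows "opt_quantizer \<mu> N \<Gamma> \<longleftrightarrow>
     (\<exists>\<nu>\<in>Pcvx \<mu> N. emeasure \<nu> \<Gamma> = 1 \<and> (\<integral>x. norm x ^ 2 \<partial>\<nu>) = (SUP \<eta>\<in>Pcvx \<mu> N. \<integral>x. norm x ^ 2 \<partial>\<eta>))"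
proof
  assume opt: "opt_quantizer \<mu> N \<Gamma>"
  then have "\<Gamma> \<noteq> {}" by (simp add: opt_quantizer_def)
  then obtain p where p: "nn_proj \<Gamma> p" using nn_proj_ex[OF G(1)] by blast
  from opt_nu0[OF opt p]
  show "\<exists>\<nu>\<in>Pcvx \<mu> N. emeasure \<nu> \<Gamma> = 1 \<and> (\<integral>x. norm x ^ 2 \<partial>\<nu>) = (SUP \<eta>\<in>Pcvx \<mu> N. \<integral>x. norm x ^ 2 \<partial>\<eta>)"
    by blast
next
  assume "\<exists>\<nu>\<in>Pcvx \<mu> N. emeasure \<nu> \<Gamma> = 1 \<and> (\<integral>x. norm x ^ 2 \<partial>\<nu>) = (SUP \<eta>\<in>Pcvx \<mu> N. \<integral>x. norm x ^ 2 \<partial>\<eta>)"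
  then obtain \<nu> where nu: "\<nu> \<in> Pcvx \<mu> N" "emeasure \<nu> \<Gamma> = 1"
    "(\<integral>x. norm x ^ 2 \<partial>\<nu>) = (SUP \<eta>\<in>Pcvx \<mu> N. \<integral>x. norm x ^ 2 \<partial>\<eta>)" by blast
  obtain S where S: "prob_space \<nu>" "sets \<nu> = sets borel" "finite S" "card S \<le> N" "emeasure \<nu> S = 1"
    "S \<noteq> {}" "cvx_le \<nu> \<mu>" using Pc_props[OF nu(1)] by blast
  have Gne: "\<Gamma> \<noteq> {}" using nu(2) by auto
  have up: "(\<integral>x. norm x ^ 2 \<partial>\<nu>) \<le> (\<integral>x. norm x ^ 2 \<partial>\<mu>) - Dst \<Gamma>" by (rule F2[OF S(7,1,2) G(1) nu(2)])
  show "opt_quantizer \<mu> N \<Gamma>"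
    unfolding opt_quantizer_def
  proof (intro conjI G Gne allI impI)
    fix \<Gamma>' :: "'a set" assume h: "finite \<Gamma>' \<and> \<Gamma>' \<noteq> {} \<and> card \<Gamma>' \<le> N"
    have "(\<integral>x. norm x ^ 2 \<partial>\<mu>) - Dst \<Gamma>' \<le> (\<integral>x. norm x ^ 2 \<partial>\<nu>)" using Pc_upper(2)[of \<Gamma>'] h nu(3) by simp
    then have "Dst \<Gamma> \<le> Dst \<Gamma>'" using up by simp
    then show "distortion \<mu> \<Gamma> \<le> distortion \<mu> \<Gamma>'" using h Gne by (simp add: distortion_eq ennreal_leI)
  qed
qed

lemma moreover_part:
  fixes \<Gamma> :: "'a set"
  assumes G: "finite \<Gamma>" "card \<Gamma> \<le> N" and nu: "\<nu> \<in> Pcvx \<mu> N" "emeasure \<nu> \<Gamma> = 1"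
    and cases: "W2 \<mu> \<nu> = (INF \<eta>\<in>Pcvx \<mu> N. W2 \<mu> \<eta>) \<or>
             (\<integral>x. norm x ^ 2 \<partial>\<nu>) = (SUP \<eta>\<in>Pcvx \<mu> N. \<integral>x. norm x ^ 2 \<partial>\<eta>)"
  shows "W2 \<nu> \<mu> = M2 \<nu> \<mu> \<and> (\<forall>p. nn_proj \<Gamma> p \<longrightarrow> \<nu> = distr \<mu> borel p)"
proof -
  have opt: "opt_quantizer \<mu> N \<Gamma>" using cases iffW[OF G] iffM[OF G] nu by blast
  have Gne: "\<Gamma> \<noteq> {}" using nu(2) by auto
  obtain S where S: "prob_space \<nu>" "sets \<nu> = sets borel" "finite S" "card S \<le> N" "emeasure \<nu> S = 1"
    "S \<noteq> {}" "cvx_le \<nu> \<mu>" using Pc_props[OF nu(1)] by blast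
  have key: "measure \<nu> {\<gamma>} \<le> measure \<mu> {x. dist x \<gamma> ^ 2 - \<epsilon> < infdist x \<Gamma> ^ 2}"
    if g: "\<gamma> \<in> \<Gamma>" and e: "\<epsilon> > 0" for \<gamma> \<epsilon>
  proof -
    let ?U = "{x. dist x \<gamma> ^ 2 - \<epsilon> < infdist x \<Gamma> ^ 2}"
    from cases show ?thesis
    proof
      assume W: "W2 \<mu> \<nu> = (INF \<eta>\<in>Pcvx \<mu> N. W2 \<mu> \<eta>)"
      have "W2 \<mu> \<nu> \<le> sqrt (Dst \<Gamma>)" using Pc_upper(1)[OF G(1) Gne G(2)] W by simp
      then have "W2 \<mu> \<nu> ^ 2 \<le> sqrt (Dst \<Gamma>) ^ 2" using W2_nonneg by (intro power_mono) auto
      then have W2e: "W2 \<mu> \<nu> ^ 2 \<le> Dst \<Gamma>" using Dst_nonneg[of \<Gamma>] by simp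
      have "Dst \<Gamma> + \<epsilon> * measure \<nu> {\<gamma>} \<le> W2 \<mu> \<nu> ^ 2 + \<epsilon> * measure \<mu> ?U"
        by (rule F1W[OF S(1,2) G(1) nu(2)]) (use e in simp)
      then have "\<epsilon> * measure \<nu> {\<gamma>} \<le> \<epsilon> * measure \<mu> ?U" using W2e by simp
      then show ?thesis using e by simp
    next
      assume Mc: "(\<integral>x. norm x ^ 2 \<partial>\<nu>) = (SUP \<eta>\<in>Pcvx \<mu> N. \<integral>x. norm x ^ 2 \<partial>\<eta>)"
      have m2e: "(\<integral>x. norm x ^ 2 \<partial>\<mu>) - Dst \<Gamma> \<le> (\<integral>x. norm x ^ 2 \<partial>\<nu>)"
        using Pc_upper(2)[OF G(1) Gne G(2)] Mc by simp
      have "(\<integral>x. norm x ^ 2 \<partial>\<nu>) + \<epsilon> * measure \<nu> {\<gamma>} \<le> (\<integral>x. norm x ^ 2 \<partial>\<mu>) - Dst \<Gamma> + \<epsilon> * measure \<mu> ?U"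
        by (rule F2gen[OF S(7,1,2) G(1) nu(2) g]) (use e in simp)
      then have "\<epsilon> * measure \<nu> {\<gamma>} \<le> \<epsilon> * measure \<mu> ?U" using m2e by simp
      then show ?thesis using e by simp
    qed
  qed
  have acl: "measure \<nu> {\<gamma>} \<le> measure \<mu> (Acl \<Gamma> \<gamma>)" if g: "\<gamma> \<in> \<Gamma>" for \<gamma>
    by (rule lim_U[OF g]) (rule key[OF g])
  have eq: "\<nu> = distr \<mu> borel p" if p: "nn_proj \<Gamma> p" for p
  proof (rule nu_eq[OF S(1,2) nu(2) G(1) p])
    fix \<gamma> assume g: "\<gamma> \<in> \<Gamma>"
    show "measure \<nu> {\<gamma>} \<le> measure \<mu> (p -` {\<gamma>})"
      using acl[OF g] proj_bound[OF opt p g] by simp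
  qed
  obtain p0 where p0: "nn_proj \<Gamma> p0" using nn_proj_ex[OF G(1) Gne] by blast
  have "W2 \<nu> \<mu> = M2 \<nu> \<mu>" using W2_M2[OF opt p0] eq[OF p0] by simp
  then show ?thesis using eq by blast
qed

end

theorem proposition1:
  fixes \<mu> :: "'a::euclidean_space measure" and N :: nat and \<Gamma> :: "'a set"
  assumes "P2 \<mu>" and "N \<ge> 1" and "finite \<Gamma>" and "card \<Gamma> \<le> N"
  shows "(opt_quantizer \<mu> N \<Gamma> \<longleftrightarrow>
            (\<exists>\<nu>\<in>Pcvx \<mu> N. emeasure \<nu> \<Gamma> = 1 \<and> W2 \<mu> \<nu> = (INF \<eta>\<in>Pcvx \<mu> N. W2 \<mu> \<eta>)))
       \<and> (opt_quantizer \<mu> N \<Gamma> \<longleftrightarrow>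
            (\<exists>\<nu>\<in>Pcvx \<mu> N. emeasure \<nu> \<Gamma> = 1 \<and>
               (\<integral>x. norm x ^ 2 \<partial>\<nu>) = (SUP \<eta>\<in>Pcvx \<mu> N. \<integral>x. norm x ^ 2 \<partial>\<eta>)))
       \<and> (\<forall>\<nu>\<in>Pcvx \<mu> N. emeasure \<nu> \<Gamma> = 1 \<and>
            (W2 \<mu> \<nu> = (INF \<eta>\<in>Pcvx \<mu> N. W2 \<mu> \<eta>) \<or>
             (\<integral>x. norm x ^ 2 \<partial>\<nu>) = (SUP \<eta>\<in>Pcvx \<mu> N. \<integral>x. norm x ^ 2 \<partial>\<eta>))
          \<longrightarrow> W2 \<nu> \<mu> = M2 \<nu> \<mu> \<and> (\<forall>p. nn_proj \<Gamma> p \<longrightarrow> \<nu> = distr \<mu> borel p))"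
proof -
  interpret qz \<mu> by unfold_locales (rule assms(1))
  show ?thesis
    using iffW[OF assms(3,4)] iffM[OF assms(3,4)] moreover_part[OF assms(3,4)] by blast
qed


end
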